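(* Let $G=(\mathscr{V},\mathscr{E},m,\theta)$ be a weighted graph, $V:\mathscr{V}\to\mathbb{R}$ arbitrary, and $\gamma>0$. Suppose that for every sequence $(x_n)_{n\in\mathbb{N}}\in\mathscr{V}^{\mathbb{N}}$ with $\mathscr{E}(x_n,x_{n+1})>0$ for all $n$, one has \[ \sum_{n\in\mathbb{N}}m^2(x_n)\prod_{i=0}^{n-1}\frac{\gamma}{d_G(x_i)}=\infty. \] Then the operator $H:=\Delta_{\mathscr{E},\theta}+V(Q)$ is essentially self-adjoint on $\mathcal{C}_c(\mathscr{V})$.
   Context: A weighted graph $G=(\mathscr{V},\mathscr{E},m,\theta)$: $\mathscr{V}$ countable, $\mathscr{E}:\mathscr{V}\times\mathscr{V}\to[0,\infty)$ symmetric, $m:\mathscr{V}\to(0,\infty)$, $\theta:\mathscr{V}\times\mathscr{V}\to[-\pi,\pi]$ antisymmetric; assumed locally finite, connected, without loops. Work in $\ell^2(\mathscr{V},m^2)$ with inner product $\sum_x m^2(x)\overline{f(x)}g(x)$; $\mathcal{C}_c(\mathscr{V})$ = finitely supported functions. $d_G(x)=m^{-2}(x)\sum_y\mathscr{E}(x,y)$. On $\mathcal{C}_c(\mathscr{V})$, $(Hf)(x)=m^{-2}(x)\sum_y\mathscr{E}(x,y)(f(x)-e^{i\theta(x,y)}f(y))+V(x)f(x)$. *)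

theory Defs
  imports "HOL-Analysis.Analysis"
begin

text \<open>Weighted graph data: E (edge weights), m (vertex weights), theta (magnetic phase).
  Functions on the vertex type 'v are complex valued; the Hilbert space is l^2(V, m^2).\<close>

definition in_l2 :: "('v \<Rightarrow> real) \<Rightarrow> ('v \<Rightarrow> complex) \<Rightarrow> bool" where
  "in_l2 m f \<longleftrightarrow> (\<lambda>x. (m x)\<^sup>2 * (cmod (f x))\<^sup>2) summable_on UNIV"

definition l2_inner :: "('v \<Rightarrow> real) \<Rightarrow> ('v \<Rightarrow> complex) \<Rightarrow> ('v \<Rightarrow> complex) \<Rightarrow> complex" where
  "l2_inner m f g = (\<Sum>\<^sub>\<infinity>x. complex_of_real ((m x)\<^sup>2) * cnj (f x) * g x)"

definition l2_norm :: "('v \<Rightarrow> real) \<Rightarrow> ('v \<Rightarrow> complex) \<Rightarrow> real" where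
  "l2_norm m f = sqrt (\<Sum>\<^sub>\<infinity>x. (m x)\<^sup>2 * (cmod (f x))\<^sup>2)"

definition Cc :: "('v \<Rightarrow> complex) set" where
  "Cc = {f. finite {x. f x \<noteq> 0}}"

definition weighted_degree :: "('v \<Rightarrow> 'v \<Rightarrow> real) \<Rightarrow> ('v \<Rightarrow> real) \<Rightarrow> 'v \<Rightarrow> real" where
  "weighted_degree E m x = (\<Sum>y\<in>{y. E x y \<noteq> 0}. E x y) / (m x)\<^sup>2"

definition Hop :: "('v \<Rightarrow> 'v \<Rightarrow> real) \<Rightarrow> ('v \<Rightarrow> real) \<Rightarrow> ('v \<Rightarrow> 'v \<Rightarrow> real) \<Rightarrow> ('v \<Rightarrow> real)
    \<Rightarrow> ('v \<Rightarrow> complex) \<Rightarrow> ('v \<Rightarrow> complex)" where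
  "Hop E m \<theta> V f = (\<lambda>x. complex_of_real (1 / (m x)\<^sup>2) *
      (\<Sum>y\<in>{y. E x y \<noteq> 0}. complex_of_real (E x y) *
          (f x - exp (\<i> * complex_of_real (\<theta> x y)) * f y))
      + complex_of_real (V x) * f x)"

definition graph_H_Cc where
  "graph_H_Cc E m \<theta> V = {(f, Hop E m \<theta> V f) | f. f \<in> Cc}"

text \<open>Operators are handled through their graphs (sets of pairs) in l^2(V,m^2).\<close>
definition l2_closure :: "('v \<Rightarrow> real) \<Rightarrow> (('v \<Rightarrow> complex) \<times> ('v \<Rightarrow> complex)) set
    \<Rightarrow> (('v \<Rightarrow> complex) \<times> ('v \<Rightarrow> complex)) set" where
  "l2_closure m A = {(f, g). in_l2 m f \<and> in_l2 m g \<and>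
      (\<exists>s. (\<forall>n. s n \<in> A) \<and> (\<lambda>n. l2_norm m (fst (s n) - f)) \<longlonglongrightarrow> 0
                        \<and> (\<lambda>n. l2_norm m (snd (s n) - g)) \<longlonglongrightarrow> 0)}"

definition l2_adjoint :: "('v \<Rightarrow> real) \<Rightarrow> (('v \<Rightarrow> complex) \<times> ('v \<Rightarrow> complex)) set
    \<Rightarrow> (('v \<Rightarrow> complex) \<times> ('v \<Rightarrow> complex)) set" where
  "l2_adjoint m A = {(u, w). in_l2 m u \<and> in_l2 m w \<and>
      (\<forall>(f, g)\<in>A. l2_inner m u g = l2_inner m w f)}"

definition densely_defined_operator :: "('v \<Rightarrow> real) \<Rightarrow> (('v \<Rightarrow> complex) \<times> ('v \<Rightarrow> complex)) set \<Rightarrow> bool" where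
  "densely_defined_operator m A \<longleftrightarrow>
     (\<forall>(f, g)\<in>A. in_l2 m f \<and> in_l2 m g) \<and>
     (\<forall>f g h. (f, g) \<in> A \<longrightarrow> (f, h) \<in> A \<longrightarrow> g = h) \<and>
     (\<forall>u. in_l2 m u \<longrightarrow> (\<forall>e>0. \<exists>(f, g)\<in>A. l2_norm m (f - u) < e))"

definition self_adjoint_l2 :: "('v \<Rightarrow> real) \<Rightarrow> (('v \<Rightarrow> complex) \<times> ('v \<Rightarrow> complex)) set \<Rightarrow> bool" where
  "self_adjoint_l2 m A \<longleftrightarrow> densely_defined_operator m A \<and> l2_adjoint m A = A"

definition essentially_self_adjoint_l2 :: "('v \<Rightarrow> real) \<Rightarrow> (('v \<Rightarrow> complex) \<times> ('v \<Rightarrow> complex)) set \<Rightarrow> bool" where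
  "essentially_self_adjoint_l2 m A \<longleftrightarrow>
     densely_defined_operator m A \<and> self_adjoint_l2 m (l2_closure m A)"

end

theory Submission
  imports Defs
begin

definition nrm2 :: "('v \<Rightarrow> real) \<Rightarrow> ('v \<Rightarrow> complex) \<Rightarrow> real" where
  "nrm2 m f = (\<Sum>\<^sub>\<infinity>x. (m x)\<^sup>2 * (cmod (f x))\<^sup>2)"

lemma l2_norm_nrm2: "l2_norm m f = sqrt (nrm2 m f)"
  by (simp add: l2_norm_def nrm2_def)

lemma nrm2_nonneg: "nrm2 m f \<ge> 0"
  unfolding nrm2_def by (rule infsum_nonneg) auto

lemma l2_norm_nonneg: "l2_norm m f \<ge> 0"
  by (simp add: l2_norm_nrm2 nrm2_nonneg)

lemma l2_norm_sq: "(l2_norm m f)\<^sup>2 = nrm2 m f"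
  by (simp add: l2_norm_nrm2 nrm2_nonneg)

lemma infsum_diff':
  fixes f g :: "'a \<Rightarrow> 'b::{topological_ab_group_add, t2_space}"
  assumes "f summable_on A" "g summable_on A"
  shows "infsum (\<lambda>x. f x - g x) A = infsum f A - infsum g A"
proof -
  have "infsum (\<lambda>x. f x + (- g x)) A = infsum f A + infsum (\<lambda>x. - g x) A"
    by (rule infsum_add) (use assms in \<open>auto simp: summable_on_uminus\<close>)
  then show ?thesis by (simp add: infsum_uminus)
qed

lemma summable_on_diff':
  fixes f g :: "'a \<Rightarrow> 'b::{topological_ab_group_add}"
  assumes "f summable_on A" "g summable_on A"
  shows "(\<lambda>x. f x - g x) summable_on A"
proof -
  have "(\<lambda>x. f x + (- g x)) summable_on A"
    by (rule summable_on_add) (use assms in \<open>auto simp: summable_on_uminus\<close>)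
  then show ?thesis by simp
qed

lemma in_l2_bound2:
  assumes "in_l2 m f" "in_l2 m g" "\<And>x. cmod (h x) \<le> cmod (f x) + cmod (g x)"
  shows "in_l2 m h"
proof -
  have s: "(\<lambda>x. 2*((m x)\<^sup>2*(cmod (f x))\<^sup>2) + 2*((m x)\<^sup>2*(cmod (g x))\<^sup>2)) summable_on UNIV"
    using assms by (intro summable_on_add summable_on_cmult_right) (auto simp: in_l2_def)
  show ?thesis unfolding in_l2_def
  proof (rule summable_on_comparison_test[OF s])
    fix x
    have a: "cmod (h x) \<le> cmod (f x) + cmod (g x)" by (rule assms(3))
    have "(cmod (h x))\<^sup>2 \<le> (cmod (f x) + cmod (g x))\<^sup>2"
      using a by (intro power_mono) auto
    also have "\<dots> \<le> 2*(cmod (f x))\<^sup>2 + 2*(cmod (g x))\<^sup>2"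
    proof -
      have "0 \<le> (cmod (f x) - cmod (g x))\<^sup>2" by simp
      then show ?thesis by (simp add: power2_eq_square algebra_simps)
    qed
    finally have "(cmod (h x))\<^sup>2 \<le> 2*(cmod (f x))\<^sup>2 + 2*(cmod (g x))\<^sup>2" .
    then have "(m x)\<^sup>2 * (cmod (h x))\<^sup>2 \<le> (m x)\<^sup>2 * (2*(cmod (f x))\<^sup>2 + 2*(cmod (g x))\<^sup>2)"
      by (intro mult_left_mono) auto
    then show "(m x)\<^sup>2 * (cmod (h x))\<^sup>2 \<le> 2*((m x)\<^sup>2*(cmod (f x))\<^sup>2) + 2*((m x)\<^sup>2*(cmod (g x))\<^sup>2)"
      by (simp add: algebra_simps)
  qed simp
qed

lemma in_l2_add: "in_l2 m f \<Longrightarrow> in_l2 m g \<Longrightarrow> in_l2 m (\<lambda>x. f x + g x)"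
  by (rule in_l2_bound2[of m f g]) (auto simp: norm_triangle_ineq)

lemma in_l2_diff: "in_l2 m f \<Longrightarrow> in_l2 m g \<Longrightarrow> in_l2 m (f - g)"
  by (rule in_l2_bound2[of m f g]) (auto simp: norm_triangle_ineq4)

lemma in_l2_scale: assumes "in_l2 m f" shows "in_l2 m (\<lambda>x. c * f x)"
proof -
  have "(\<lambda>x. (cmod c)\<^sup>2 * ((m x)\<^sup>2 * (cmod (f x))\<^sup>2)) summable_on UNIV"
    using assms by (intro summable_on_cmult_right) (auto simp: in_l2_def)
  then show ?thesis unfolding in_l2_def
    by (rule summable_on_comparison_test) (auto simp: norm_mult power_mult_distrib)
qed

lemma in_l2_zero: "in_l2 m (\<lambda>x. 0)"
  by (simp add: in_l2_def)

lemma inner_summable: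
  assumes "in_l2 m f" "in_l2 m g"
  shows "(\<lambda>x. complex_of_real ((m x)\<^sup>2) * cnj (f x) * g x) summable_on UNIV"
proof -
  have s: "(\<lambda>x. (m x)\<^sup>2*(cmod (f x))\<^sup>2 + (m x)\<^sup>2*(cmod (g x))\<^sup>2) summable_on UNIV"
    using assms by (intro summable_on_add) (auto simp: in_l2_def)
  have "(\<lambda>x. norm (complex_of_real ((m x)\<^sup>2) * cnj (f x) * g x)) summable_on UNIV"
  proof (rule summable_on_comparison_test[OF s])
    fix x
    have "cmod (f x) * cmod (g x) \<le> (cmod (f x))\<^sup>2 + (cmod (g x))\<^sup>2"
    proof -
      have "0 \<le> (cmod (f x) - cmod (g x))\<^sup>2" by simp
      then have "2 * (cmod (f x) * cmod (g x)) \<le> (cmod (f x))\<^sup>2 + (cmod (g x))\<^sup>2"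
        by (simp add: power2_eq_square algebra_simps)
      moreover have "0 \<le> cmod (f x) * cmod (g x)" by simp
      ultimately show ?thesis by linarith
    qed
    then have "(m x)\<^sup>2 * (cmod (f x) * cmod (g x)) \<le> (m x)\<^sup>2 * ((cmod (f x))\<^sup>2 + (cmod (g x))\<^sup>2)"
      by (intro mult_left_mono) auto
    then show "norm (complex_of_real ((m x)\<^sup>2) * cnj (f x) * g x) \<le> (m x)\<^sup>2*(cmod (f x))\<^sup>2 + (m x)\<^sup>2*(cmod (g x))\<^sup>2"
      by (simp add: norm_mult norm_power algebra_simps)
  qed simp
  then show ?thesis
    using summable_on_iff_abs_summable_on_complex by blast
qed

lemma inner_cnj: "l2_inner m g f = cnj (l2_inner m f g)"
  unfolding l2_inner_def infsum_cnj[symmetric]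
  by (simp add: mult.commute mult.left_commute)

lemma cnj_mult_self: "cnj z * z = (complex_of_real (cmod z))\<^sup>2"
  by (metis complex_norm_square mult.commute of_real_power)

lemma inner_self: assumes "in_l2 m f" shows "l2_inner m f f = complex_of_real (nrm2 m f)"
proof -
  have "l2_inner m f f = (\<Sum>\<^sub>\<infinity>x. complex_of_real ((m x)\<^sup>2 * (cmod (f x))\<^sup>2))"
    unfolding l2_inner_def
    by (rule infsum_cong) (simp add: cnj_mult_self)
  also have "\<dots> = complex_of_real (nrm2 m f)"
    unfolding nrm2_def
    by (rule infsumI[OF has_sum_of_real[OF has_sum_infsum]]) (use assms in \<open>simp add: in_l2_def\<close>)
  finally show ?thesis .
qed

abbreviation ipt where "ipt m a c x \<equiv> complex_of_real ((m x)\<^sup>2) * cnj (a x) * c x"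

lemma inner_diff_left:
  assumes "in_l2 m a" "in_l2 m b" "in_l2 m c"
  shows "l2_inner m (a - b) c = l2_inner m a c - l2_inner m b c"
proof -
  have "l2_inner m (a - b) c = (\<Sum>\<^sub>\<infinity>x. ipt m a c x - ipt m b c x)"
    unfolding l2_inner_def by (rule infsum_cong) (simp add: algebra_simps)
  also have "\<dots> = l2_inner m a c - l2_inner m b c"
    unfolding l2_inner_def by (rule infsum_diff') (use inner_summable assms in auto)
  finally show ?thesis .
qed

lemma inner_add_left:
  assumes "in_l2 m a" "in_l2 m b" "in_l2 m c"
  shows "l2_inner m (\<lambda>x. a x + b x) c = l2_inner m a c + l2_inner m b c"
proof -
  have "l2_inner m (\<lambda>x. a x + b x) c = (\<Sum>\<^sub>\<infinity>x. ipt m a c x + ipt m b c x)"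
    unfolding l2_inner_def by (rule infsum_cong) (simp add: algebra_simps)
  also have "\<dots> = l2_inner m a c + l2_inner m b c"
    unfolding l2_inner_def by (rule infsum_add) (use inner_summable assms in auto)
  finally show ?thesis .
qed

lemma inner_diff_right:
  assumes "in_l2 m a" "in_l2 m b" "in_l2 m c"
  shows "l2_inner m c (a - b) = l2_inner m c a - l2_inner m c b"
proof -
  have "l2_inner m c (a - b) = (\<Sum>\<^sub>\<infinity>x. ipt m c a x - ipt m c b x)"
    unfolding l2_inner_def by (rule infsum_cong) (simp add: algebra_simps)
  also have "\<dots> = l2_inner m c a - l2_inner m c b"
    unfolding l2_inner_def by (rule infsum_diff') (use inner_summable assms in auto)
  finally show ?thesis .
qed

lemma inner_add_right:
  assumes "in_l2 m a" "in_l2 m b" "in_l2 m c"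
  shows "l2_inner m c (\<lambda>x. a x + b x) = l2_inner m c a + l2_inner m c b"
proof -
  have "l2_inner m c (\<lambda>x. a x + b x) = (\<Sum>\<^sub>\<infinity>x. ipt m c a x + ipt m c b x)"
    unfolding l2_inner_def by (rule infsum_cong) (simp add: algebra_simps)
  also have "\<dots> = l2_inner m c a + l2_inner m c b"
    unfolding l2_inner_def by (rule infsum_add) (use inner_summable assms in auto)
  finally show ?thesis .
qed

lemma inner_scale_right: "l2_inner m a (\<lambda>x. t * c x) = t * l2_inner m a c"
  unfolding l2_inner_def
  by (subst infsum_cmult_right'[symmetric]) (auto intro!: infsum_cong simp: algebra_simps)

lemma inner_scale_left: "l2_inner m (\<lambda>x. t * a x) c = cnj t * l2_inner m a c"
  unfolding l2_inner_def
  by (subst infsum_cmult_right'[symmetric]) (auto intro!: infsum_cong simp: algebra_simps)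

lemma cmod_diff_sq: "(cmod (a - b))\<^sup>2 = (cmod a)\<^sup>2 + (cmod b)\<^sup>2 - 2 * Re (cnj a * b)"
  unfolding cmod_power2 by (simp add: power2_eq_square algebra_simps)

lemma cmod_add_sq: "(cmod (a + b))\<^sup>2 = (cmod a)\<^sup>2 + (cmod b)\<^sup>2 + 2 * Re (cnj a * b)"
  unfolding cmod_power2 by (simp add: power2_eq_square algebra_simps)

lemma re_ipt_summable:
  assumes "in_l2 m a" "in_l2 m b"
  shows "(\<lambda>x. Re (ipt m a b x)) summable_on UNIV"
  using summable_on_Re[OF inner_summable[OF assms]] by simp

lemma infsum_re_ipt:
  assumes "in_l2 m a" "in_l2 m b"
  shows "(\<Sum>\<^sub>\<infinity>x. Re (ipt m a b x)) = Re (l2_inner m a b)"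
  unfolding l2_inner_def by (rule infsum_Re[OF inner_summable[OF assms]])

lemma nrm2_diff:
  assumes a: "in_l2 m a" and b: "in_l2 m b"
  shows "nrm2 m (a - b) = nrm2 m a + nrm2 m b - 2 * Re (l2_inner m a b)"
proof -
  have "nrm2 m (a - b) = (\<Sum>\<^sub>\<infinity>x. ((m x)\<^sup>2 * (cmod (a x))\<^sup>2 + (m x)\<^sup>2 * (cmod (b x))\<^sup>2)
           - 2 * Re (ipt m a b x))"
    unfolding nrm2_def
    by (rule infsum_cong) (simp add: cmod_diff_sq algebra_simps)
  also have "\<dots> = (\<Sum>\<^sub>\<infinity>x. ((m x)\<^sup>2 * (cmod (a x))\<^sup>2 + (m x)\<^sup>2 * (cmod (b x))\<^sup>2))
           - (\<Sum>\<^sub>\<infinity>x. 2 * Re (ipt m a b x))"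
  proof (rule infsum_diff')
    show "(\<lambda>x. (m x)\<^sup>2 * (cmod (a x))\<^sup>2 + (m x)\<^sup>2 * (cmod (b x))\<^sup>2) summable_on UNIV"
      using a b by (intro summable_on_add) (auto simp: in_l2_def)
    show "(\<lambda>x. 2 * Re (ipt m a b x)) summable_on UNIV"
      by (rule summable_on_cmult_right[OF re_ipt_summable[OF a b]])
  qed
  also have "(\<Sum>\<^sub>\<infinity>x. ((m x)\<^sup>2 * (cmod (a x))\<^sup>2 + (m x)\<^sup>2 * (cmod (b x))\<^sup>2)) = nrm2 m a + nrm2 m b"
    unfolding nrm2_def by (rule infsum_add) (use a b in \<open>auto simp: in_l2_def\<close>)
  also have "(\<Sum>\<^sub>\<infinity>x. 2 * Re (ipt m a b x)) = 2 * Re (l2_inner m a b)"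
    by (subst infsum_cmult_right') (simp only: infsum_re_ipt[OF a b])
  finally show ?thesis .
qed

lemma nrm2_add:
  assumes a: "in_l2 m a" and b: "in_l2 m b"
  shows "nrm2 m (\<lambda>x. a x + b x) = nrm2 m a + nrm2 m b + 2 * Re (l2_inner m a b)"
proof -
  have "nrm2 m (\<lambda>x. a x + b x) = (\<Sum>\<^sub>\<infinity>x. ((m x)\<^sup>2 * (cmod (a x))\<^sup>2 + (m x)\<^sup>2 * (cmod (b x))\<^sup>2)
           + 2 * Re (ipt m a b x))"
    unfolding nrm2_def
    by (rule infsum_cong) (simp add: cmod_add_sq algebra_simps)
  also have "\<dots> = (\<Sum>\<^sub>\<infinity>x. ((m x)\<^sup>2 * (cmod (a x))\<^sup>2 + (m x)\<^sup>2 * (cmod (b x))\<^sup>2))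
           + (\<Sum>\<^sub>\<infinity>x. 2 * Re (ipt m a b x))"
  proof (rule infsum_add)
    show "(\<lambda>x. (m x)\<^sup>2 * (cmod (a x))\<^sup>2 + (m x)\<^sup>2 * (cmod (b x))\<^sup>2) summable_on UNIV"
      using a b by (intro summable_on_add) (auto simp: in_l2_def)
    show "(\<lambda>x. 2 * Re (ipt m a b x)) summable_on UNIV"
      by (rule summable_on_cmult_right[OF re_ipt_summable[OF a b]])
  qed
  also have "(\<Sum>\<^sub>\<infinity>x. ((m x)\<^sup>2 * (cmod (a x))\<^sup>2 + (m x)\<^sup>2 * (cmod (b x))\<^sup>2)) = nrm2 m a + nrm2 m b"
    unfolding nrm2_def by (rule infsum_add) (use a b in \<open>auto simp: in_l2_def\<close>)
  also have "(\<Sum>\<^sub>\<infinity>x. 2 * Re (ipt m a b x)) = 2 * Re (l2_inner m a b)"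
    by (subst infsum_cmult_right') (simp only: infsum_re_ipt[OF a b])
  finally show ?thesis .
qed

lemma nrm2_scale: "nrm2 m (\<lambda>x. c * a x) = (cmod c)\<^sup>2 * nrm2 m a"
  unfolding nrm2_def
  by (subst infsum_cmult_right'[symmetric]) (simp add: norm_mult power_mult_distrib algebra_simps)

lemma l2_norm_scale: "l2_norm m (\<lambda>x. c * a x) = cmod c * l2_norm m a"
  by (simp add: l2_norm_nrm2 nrm2_scale real_sqrt_mult)

lemma single_le_nrm2:
  assumes "in_l2 m f" shows "(m x)\<^sup>2 * (cmod (f x))\<^sup>2 \<le> nrm2 m f"
proof -
  have "sum (\<lambda>x. (m x)\<^sup>2 * (cmod (f x))\<^sup>2) {x} \<le> nrm2 m f"
    unfolding nrm2_def by (rule finite_sum_le_infsum) (use assms in \<open>auto simp: in_l2_def\<close>)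
  then show ?thesis by simp
qed

lemma pointwise_le_norm:
  assumes "in_l2 m f" "m x > 0"
  shows "cmod (f x) \<le> l2_norm m f / m x"
proof -
  have "(m x * cmod (f x))\<^sup>2 \<le> nrm2 m f"
    using single_le_nrm2[OF assms(1)] by (simp add: power_mult_distrib)
  then have "m x * cmod (f x) \<le> l2_norm m f"
    by (simp add: l2_norm_nrm2 real_le_rsqrt)
  then show ?thesis using assms(2) by (simp add: field_simps)
qed

lemma real_cs_aux:
  fixes c F G :: real
  assumes "c \<ge> 0" "F \<ge> 0" "G \<ge> 0" and H: "\<And>a. a > 0 \<Longrightarrow> c \<le> (a * F + G / a) / 2"
  shows "c \<le> sqrt F * sqrt G"
proof (cases "F > 0 \<and> G > 0")
  case True
  define a where "a = sqrt G / sqrt F"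
  have ap: "a > 0" using True by (simp add: a_def)
  have "a * F = sqrt G * (F / sqrt F)" by (simp add: a_def)
  also have "F / sqrt F = sqrt F" using assms by (simp add: real_div_sqrt)
  finally have 1: "a * F = sqrt F * sqrt G" by simp
  have "G / a = (G / sqrt G) * sqrt F" by (simp add: a_def)
  also have "G / sqrt G = sqrt G" using assms by (simp add: real_div_sqrt)
  finally have 2: "G / a = sqrt F * sqrt G" by simp
  show ?thesis using H[OF ap] 1 2 by simp
next
  case False
  show ?thesis
  proof (rule ccontr)
    assume "\<not> ?thesis"
    then have cp: "c > 0" using assms False by auto
    show False
    proof (cases "F = 0")
      case True
      define a where "a = (G + 1) / c"
      have ap: "a > 0" using cp assms by (simp add: a_def)
      have "G / a = G * c / (G + 1)" using cp assms by (simp add: a_def)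
      also have "\<dots> < c * 1" using cp assms by (simp add: field_simps)
      finally show False using H[OF ap] True cp by simp
    next
      case F: False
      then have G: "G = 0" using False assms by auto
      define a where "a = c / (F + 1)"
      have ap: "a > 0" using cp assms by (simp add: a_def)
      have "a * F = c * F / (F + 1)" by (simp add: a_def)
      also have "\<dots> < c * 1" using cp assms by (simp add: field_simps)
      finally show False using H[OF ap] G cp by simp
    qed
  qed
qed

lemma cauchy_schwarz:
  assumes f: "in_l2 m f" and g: "in_l2 m g"
  shows "cmod (l2_inner m f g) \<le> l2_norm m f * l2_norm m g"
proof -
  let ?n = "\<lambda>x. norm (ipt m f g x)"
  have abs: "Infinite_Sum.abs_summable_on (\<lambda>x. ipt m f g x) UNIV"
    using summable_on_iff_abs_summable_on_complex[THEN iffD1, OF inner_summable[OF f g]] by simp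
  have c1: "cmod (l2_inner m f g) \<le> (\<Sum>\<^sub>\<infinity>x. ?n x)"
    unfolding l2_inner_def by (rule norm_infsum_bound[OF abs])
  have "(\<Sum>\<^sub>\<infinity>x. ?n x) \<le> (a * nrm2 m f + nrm2 m g / a) / 2" if a: "a > 0" for a
  proof -
    have "(\<Sum>\<^sub>\<infinity>x. ?n x) \<le> (\<Sum>\<^sub>\<infinity>x. (a / 2) * ((m x)\<^sup>2 * (cmod (f x))\<^sup>2) + (1 / (2 * a)) * ((m x)\<^sup>2 * (cmod (g x))\<^sup>2))"
    proof (rule infsum_mono)
      show "?n summable_on UNIV" using abs by simp
      show "(\<lambda>x. (a / 2) * ((m x)\<^sup>2 * (cmod (f x))\<^sup>2) + (1 / (2 * a)) * ((m x)\<^sup>2 * (cmod (g x))\<^sup>2)) summable_on UNIV"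
        using f g unfolding in_l2_def by (intro summable_on_add summable_on_cmult_right)
      fix x
      have "0 \<le> (a * cmod (f x) - cmod (g x))\<^sup>2" by simp
      then have "2 * a * (cmod (f x) * cmod (g x)) \<le> a\<^sup>2 * (cmod (f x))\<^sup>2 + (cmod (g x))\<^sup>2"
        by (simp add: power2_eq_square algebra_simps)
      then have "cmod (f x) * cmod (g x) \<le> (a / 2) * (cmod (f x))\<^sup>2 + (1 / (2 * a)) * (cmod (g x))\<^sup>2"
        using a by (simp add: field_simps power2_eq_square)
      then have "(m x)\<^sup>2 * (cmod (f x) * cmod (g x)) \<le> (m x)\<^sup>2 * ((a / 2) * (cmod (f x))\<^sup>2 + (1 / (2 * a)) * (cmod (g x))\<^sup>2)"
        by (intro mult_left_mono) auto
      then show "?n x \<le> (a / 2) * ((m x)\<^sup>2 * (cmod (f x))\<^sup>2) + (1 / (2 * a)) * ((m x)\<^sup>2 * (cmod (g x))\<^sup>2)"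
        by (simp add: norm_mult norm_power algebra_simps)
    qed
    also have "\<dots> = (a / 2) * nrm2 m f + (1 / (2 * a)) * nrm2 m g"
    proof -
      have sf: "(\<lambda>x. (a / 2) * ((m x)\<^sup>2 * (cmod (f x))\<^sup>2)) summable_on UNIV"
        using f unfolding in_l2_def by (rule summable_on_cmult_right)
      have sg: "(\<lambda>x. (1 / (2 * a)) * ((m x)\<^sup>2 * (cmod (g x))\<^sup>2)) summable_on UNIV"
        using g unfolding in_l2_def by (rule summable_on_cmult_right)
      show ?thesis unfolding nrm2_def by (simp only: infsum_add[OF sf sg] infsum_cmult_right')
    qed
    also have "\<dots> = (a * nrm2 m f + nrm2 m g / a) / 2" by (simp add: field_simps)
    finally show ?thesis .
  qed
  then have "(\<Sum>\<^sub>\<infinity>x. ?n x) \<le> sqrt (nrm2 m f) * sqrt (nrm2 m g)"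
    by (intro real_cs_aux) (auto intro: infsum_nonneg nrm2_nonneg)
  with c1 show ?thesis by (simp add: l2_norm_nrm2)
qed

lemma nrm2_diff_le:
  assumes a: "in_l2 m a" and b: "in_l2 m b"
  shows "nrm2 m (a - b) \<le> (l2_norm m a + l2_norm m b)\<^sup>2"
proof -
  have "- Re (l2_inner m a b) \<le> l2_norm m a * l2_norm m b"
    using cauchy_schwarz[OF a b] abs_Re_le_cmod[of "l2_inner m a b"] by linarith
  moreover have "nrm2 m (a - b) = (l2_norm m a)\<^sup>2 + (l2_norm m b)\<^sup>2 - 2 * Re (l2_inner m a b)"
    by (simp add: nrm2_diff[OF a b] l2_norm_sq)
  ultimately show ?thesis by (simp add: power2_sum)
qed

lemma l2_norm_diff_le:
  assumes a: "in_l2 m a" and b: "in_l2 m b"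
  shows "l2_norm m (a - b) \<le> l2_norm m a + l2_norm m b"
proof -
  have "l2_norm m (a - b) = sqrt (nrm2 m (a - b))" by (simp add: l2_norm_nrm2)
  also have "\<dots> \<le> sqrt ((l2_norm m a + l2_norm m b)\<^sup>2)"
    by (rule real_sqrt_le_mono[OF nrm2_diff_le[OF a b]])
  also have "\<dots> = l2_norm m a + l2_norm m b"
    using l2_norm_nonneg[of m a] l2_norm_nonneg[of m b] by simp
  finally show ?thesis .
qed

lemma l2_norm_sym: "l2_norm m (a - b) = l2_norm m (b - a)"
  unfolding l2_norm_nrm2 nrm2_def by (simp add: norm_minus_commute)

lemma l2_norm_tri:
  assumes "in_l2 m a" "in_l2 m b" "in_l2 m c"
  shows "l2_norm m (a - c) \<le> l2_norm m (a - b) + l2_norm m (b - c)"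
proof -
  have "a - c = (a - b) - (c - b)" by (rule ext) simp
  then have "l2_norm m (a - c) \<le> l2_norm m (a - b) + l2_norm m (c - b)"
    using l2_norm_diff_le[of m "a - b" "c - b"] assms by (simp add: in_l2_diff)
  then show ?thesis by (simp add: l2_norm_sym)
qed

lemma inner_cont_left:
  assumes "in_l2 m a" "in_l2 m b" "in_l2 m c"
  shows "cmod (l2_inner m a c - l2_inner m b c) \<le> l2_norm m (a - b) * l2_norm m c"
  using cauchy_schwarz[of m "a - b" c] assms by (simp add: inner_diff_left in_l2_diff)

lemma inner_cont_right:
  assumes "in_l2 m a" "in_l2 m b" "in_l2 m c"
  shows "cmod (l2_inner m c a - l2_inner m c b) \<le> l2_norm m (a - b) * l2_norm m c"
proof -
  have "l2_inner m c a - l2_inner m c b = cnj (l2_inner m a c - l2_inner m b c)"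
    by (simp add: inner_cnj[of m c a] inner_cnj[of m c b])
  then show ?thesis by (metis complex_mod_cnj inner_cont_left[OF assms])
qed

lemma inner_tendsto_left:
  assumes "\<And>n. in_l2 m (s n)" "in_l2 m a" "in_l2 m c"
    and "(\<lambda>n. l2_norm m (s n - a)) \<longlonglongrightarrow> 0"
  shows "(\<lambda>n. l2_inner m (s n) c) \<longlonglongrightarrow> l2_inner m a c"
proof -
  have "(\<lambda>n. l2_norm m (s n - a) * l2_norm m c) \<longlonglongrightarrow> 0 * l2_norm m c"
    by (intro tendsto_mult assms tendsto_const)
  then have z: "(\<lambda>n. l2_norm m (s n - a) * l2_norm m c) \<longlonglongrightarrow> 0" by simp
  show ?thesis
    by (rule LIM_zero_cancel, rule Lim_null_comparison[OF _ z])
       (rule always_eventually, intro allI, rule inner_cont_left, use assms in auto)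
qed

lemma l2_complete:
  fixes s :: "nat \<Rightarrow> 'v \<Rightarrow> complex"
  assumes m_pos: "\<And>x. m x > 0" and l2: "\<And>n. in_l2 m (s n)"
    and C: "\<And>e. e > 0 \<Longrightarrow> \<exists>N. \<forall>n\<ge>N. \<forall>k\<ge>N. l2_norm m (s n - s k) < e"
  shows "\<exists>f. in_l2 m f \<and> (\<lambda>n. l2_norm m (s n - f)) \<longlonglongrightarrow> 0"
proof -
  have pw: "cmod (s n x - s k x) \<le> l2_norm m (s n - s k) / m x" for n k x
    using pointwise_le_norm[OF in_l2_diff[OF l2[of n] l2[of k]] m_pos[of x]] by simp
  have cau: "Cauchy (\<lambda>n. s n x)" for x
  proof (rule CauchyI)
    fix e :: real assume e: "e > 0"
    obtain N where N: "\<forall>n\<ge>N. \<forall>k\<ge>N. l2_norm m (s n - s k) < e * m x"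
      using C[of "e * m x"] e m_pos[of x] by auto
    show "\<exists>M. \<forall>n\<ge>M. \<forall>k\<ge>M. norm (s n x - s k x) < e"
    proof (intro exI allI impI)
      fix n k assume "N \<le> n" "N \<le> k"
      then have "l2_norm m (s n - s k) / m x < e" using N m_pos[of x] by (simp add: field_simps)
      then show "norm (s n x - s k x) < e" using pw[where n=n and k=k and x=x] by simp
    qed
  qed
  define f where "f x = lim (\<lambda>n. s n x)" for x
  have lim: "(\<lambda>n. s n x) \<longlonglongrightarrow> f x" for x
    using cau[of x] unfolding f_def by (simp add: Cauchy_convergent_iff convergent_LIMSEQ_iff)
  have key: "in_l2 m (s n - f) \<and> nrm2 m (s n - f) \<le> e\<^sup>2"
    if e: "e > 0" and N: "\<forall>n\<ge>N. \<forall>k\<ge>N. l2_norm m (s n - s k) < e" and n: "n \<ge> N" for e N n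
  proof -
    have fin: "(\<Sum>x\<in>S. (m x)\<^sup>2 * (cmod ((s n - f) x))\<^sup>2) \<le> e\<^sup>2" if S: "finite S" for S
    proof -
      have t: "(\<lambda>k. \<Sum>x\<in>S. (m x)\<^sup>2 * (cmod (s n x - s k x))\<^sup>2) \<longlonglongrightarrow> (\<Sum>x\<in>S. (m x)\<^sup>2 * (cmod (s n x - f x))\<^sup>2)"
        by (intro tendsto_sum tendsto_mult tendsto_const tendsto_power tendsto_norm tendsto_diff lim)
      have "(\<Sum>x\<in>S. (m x)\<^sup>2 * (cmod (s n x - s k x))\<^sup>2) \<le> e\<^sup>2" if k: "k \<ge> N" for k
      proof -
        have "(\<Sum>x\<in>S. (m x)\<^sup>2 * (cmod ((s n - s k) x))\<^sup>2) \<le> nrm2 m (s n - s k)"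
          unfolding nrm2_def
          by (rule finite_sum_le_infsum) (use S in_l2_diff[OF l2 l2, of n k] in \<open>auto simp: in_l2_def\<close>)
        also have "\<dots> = (l2_norm m (s n - s k))\<^sup>2" by (simp add: l2_norm_sq)
        also have "\<dots> \<le> e\<^sup>2"
        proof -
          have "l2_norm m (s n - s k) \<le> e" using N n k by (meson less_imp_le order_trans)
          then show ?thesis using l2_norm_nonneg[of m "s n - s k"] by (intro power_mono) auto
        qed
        finally show ?thesis by simp
      qed
      then have "(\<Sum>x\<in>S. (m x)\<^sup>2 * (cmod (s n x - f x))\<^sup>2) \<le> e\<^sup>2"
        by (intro LIMSEQ_le_const2[OF t]) auto
      then show ?thesis by simp
    qed
    have sm: "in_l2 m (s n - f)" unfolding in_l2_def
      by (rule nonneg_bdd_above_summable_on) (use fin in \<open>auto intro!: bdd_aboveI2\<close>)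
    moreover have "nrm2 m (s n - f) \<le> e\<^sup>2" unfolding nrm2_def
      by (rule infsum_le_finite_sums) (use sm fin in \<open>auto simp: in_l2_def\<close>)
    ultimately show ?thesis by simp
  qed
  obtain N1 where N1: "\<forall>n\<ge>N1. \<forall>k\<ge>N1. l2_norm m (s n - s k) < 1" using C[of 1] by auto
  have fl2: "in_l2 m f"
  proof -
    have "in_l2 m (s N1 - (s N1 - f))"
      by (rule in_l2_diff) (use key[of 1 N1 N1] N1 l2 in auto)
    moreover have "s N1 - (s N1 - f) = f" by (rule ext) simp
    ultimately show ?thesis by simp
  qed
  have "(\<lambda>n. l2_norm m (s n - f)) \<longlonglongrightarrow> 0"
  proof (rule LIMSEQ_I)
    fix r :: real assume r: "r > 0"
    obtain N where N: "\<forall>n\<ge>N. \<forall>k\<ge>N. l2_norm m (s n - s k) < r / 2" using C[of "r/2"] r by auto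
    show "\<exists>no. \<forall>n\<ge>no. norm (l2_norm m (s n - f) - 0) < r"
    proof (intro exI allI impI)
      fix n assume n: "N \<le> n"
      have "nrm2 m (s n - f) \<le> (r/2)\<^sup>2" using key[of "r/2" N n] N n r by auto
      then have "sqrt (nrm2 m (s n - f)) \<le> sqrt ((r/2)\<^sup>2)" by (rule real_sqrt_le_mono)
      then have "l2_norm m (s n - f) \<le> r / 2"
        using r by (simp add: l2_norm_nrm2)
      then show "norm (l2_norm m (s n - f) - 0) < r" using r l2_norm_nonneg[of m "s n - f"] by simp
    qed
  qed
  with fl2 show ?thesis by blast
qed

lemma Cc_l2:
  assumes "f \<in> Cc" shows "in_l2 m f"
proof -
  let ?S = "{x. f x \<noteq> 0}"
  have fin: "finite ?S" using assms by (simp add: Cc_def)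
  have "(\<lambda>x. (m x)\<^sup>2 * (cmod (f x))\<^sup>2) summable_on ?S" using fin by simp
  then show ?thesis unfolding in_l2_def
    by (rule summable_on_cong_neutral[THEN iffD1, rotated -1]) auto
qed

lemma l2_density:
  assumes u: "in_l2 m u" and e: "e > 0"
  shows "\<exists>f\<in>Cc. l2_norm m (f - u) < e"
proof -
  let ?N = "\<lambda>x. (m x)\<^sup>2 * (cmod (u x))\<^sup>2"
  have sN: "?N summable_on UNIV" using u by (simp add: in_l2_def)
  obtain F where F: "finite F" "dist (sum ?N F) (infsum ?N UNIV) \<le> e\<^sup>2 / 2"
    using infsum_finite_approximation[OF sN, of "e\<^sup>2/2"] e by auto
  define f where "f x = (if x \<in> F then u x else 0)" for x
  have "{x. f x \<noteq> 0} \<subseteq> F" by (auto simp: f_def)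
  then have fC: "f \<in> Cc" unfolding Cc_def using finite_subset F(1) by auto
  have s1: "(\<lambda>x. if x \<in> F then ?N x else 0) summable_on UNIV"
    by (rule summable_on_comparison_test[OF sN]) auto
  have s2: "(\<lambda>x. if x \<in> F then 0 else ?N x) summable_on UNIV"
    by (rule summable_on_comparison_test[OF sN]) auto
  have i1: "(\<Sum>\<^sub>\<infinity>x. if x \<in> F then ?N x else 0) = sum ?N F"
  proof -
    have "(\<Sum>\<^sub>\<infinity>x. if x \<in> F then ?N x else 0) = infsum ?N F"
      by (rule infsum_cong_neutral) auto
    then show ?thesis using F(1) by simp
  qed
  have "infsum ?N UNIV = (\<Sum>\<^sub>\<infinity>x. (if x \<in> F then ?N x else 0) + (if x \<in> F then 0 else ?N x))"
    by (rule infsum_cong) auto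
  also have "\<dots> = sum ?N F + (\<Sum>\<^sub>\<infinity>x. if x \<in> F then 0 else ?N x)"
    by (subst infsum_add[OF s1 s2]) (simp add: i1)
  finally have eq: "(\<Sum>\<^sub>\<infinity>x. if x \<in> F then 0 else ?N x) = infsum ?N UNIV - sum ?N F" by simp
  have "nrm2 m (f - u) = (\<Sum>\<^sub>\<infinity>x. if x \<in> F then 0 else ?N x)"
    unfolding nrm2_def f_def by (rule infsum_cong) auto
  also have "\<dots> \<le> e\<^sup>2 / 2"
  proof -
    have h: "\<bar>sum ?N F - infsum ?N UNIV\<bar> \<le> e\<^sup>2 / 2" using F(2) by (simp only: dist_real_def)
    have "infsum ?N UNIV - sum ?N F \<le> e\<^sup>2 / 2"
      using abs_ge_minus_self[of "sum ?N F - infsum ?N UNIV"] h by linarith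
    then show ?thesis using eq by simp
  qed
  also have "\<dots> < e\<^sup>2" using e by simp
  finally have "sqrt (nrm2 m (f - u)) < sqrt (e\<^sup>2)" by (rule real_sqrt_less_mono)
  then have "l2_norm m (f - u) < e" using e by (simp add: l2_norm_nrm2)
  with fC show ?thesis by blast
qed

lemma sum_supp_eq:
  assumes "finite A" "finite B" "\<And>y. y \<in> A - B \<Longrightarrow> g y = 0" "\<And>y. y \<in> B - A \<Longrightarrow> g y = 0"
  shows "sum g A = sum g B"
proof -
  have "sum g A = sum g (A \<union> B)"
    by (rule sum.mono_neutral_left) (use assms in auto)
  also have "\<dots> = sum g B"
    by (rule sum.mono_neutral_right) (use assms in auto)
  finally show ?thesis .
qed

locale gr =
  fixes E :: "'v \<Rightarrow> 'v \<Rightarrow> real" and m :: "'v \<Rightarrow> real"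
    and \<theta> :: "'v \<Rightarrow> 'v \<Rightarrow> real" and V :: "'v \<Rightarrow> real"
  assumes E_nonneg: "\<And>x y. E x y \<ge> 0" and E_sym: "\<And>x y. E x y = E y x"
    and m_pos: "\<And>x. m x > 0" and \<theta>_antisym: "\<And>x y. \<theta> x y = - \<theta> y x"
    and lf: "\<And>x. finite {y. E x y > 0}"
begin

abbreviation "H \<equiv> Hop E m \<theta> V"
abbreviation "A \<equiv> graph_H_Cc E m \<theta> V"
abbreviation "d \<equiv> weighted_degree E m"
abbreviation "ph x y \<equiv> exp (\<i> * complex_of_real (\<theta> x y))"

lemma Nb_eq: "{y. E x y \<noteq> 0} = {y. E x y > 0}"
  using E_nonneg by (auto simp: less_le)

lemma Nfin: "finite {y. E x y \<noteq> 0}"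
  using lf by (simp add: Nb_eq)

lemma m_nz: "m x \<noteq> 0" using m_pos[of x] by simp

lemma Hop_alt:
  "H f x = complex_of_real (d x + V x) * f x
     - complex_of_real (1 / (m x)\<^sup>2) * (\<Sum>y\<in>{y. E x y \<noteq> 0}. complex_of_real (E x y) * ph x y * f y)"
proof -
  let ?N = "{y. E x y \<noteq> 0}"
  let ?b = "(\<Sum>y\<in>?N. complex_of_real (E x y) * ph x y * f y)"
  have "(\<Sum>y\<in>?N. complex_of_real (E x y) * (f x - ph x y * f y))
      = (\<Sum>y\<in>?N. complex_of_real (E x y) * f x - complex_of_real (E x y) * ph x y * f y)"
    by (intro sum.cong refl) (simp add: algebra_simps)
  also have "\<dots> = (\<Sum>y\<in>?N. complex_of_real (E x y) * f x) - ?b"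
    by (rule sum_subtractf)
  also have "(\<Sum>y\<in>?N. complex_of_real (E x y) * f x) = complex_of_real (\<Sum>y\<in>?N. E x y) * f x"
    by (simp add: sum_distrib_right)
  finally have S: "(\<Sum>y\<in>?N. complex_of_real (E x y) * (f x - ph x y * f y))
      = complex_of_real (\<Sum>y\<in>?N. E x y) * f x - ?b" .
  have mz: "complex_of_real (m x) \<noteq> 0" using m_nz[of x] by simp
  show ?thesis
    unfolding Hop_def weighted_degree_def S
    using mz by (simp add: field_simps)
qed

abbreviation "kk x y \<equiv> complex_of_real (E x y) * ph x y"

lemma Hop_diff: "H (f - g) = H f - H g"
proof (rule ext)
  fix x
  have e: "(\<Sum>y\<in>{y. E x y \<noteq> 0}. complex_of_real (E x y) * ph x y * (f y - g y))
     = (\<Sum>y\<in>{y. E x y \<noteq> 0}. complex_of_real (E x y) * ph x y * f y) - (\<Sum>y\<in>{y. E x y \<noteq> 0}. complex_of_real (E x y) * ph x y * g y)"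
    by (simp only: sum_subtractf[symmetric] right_diff_distrib)
  show "H (f - g) x = (H f - H g) x"
    unfolding Hop_alt fun_diff_def e by (simp add: algebra_simps)
qed

lemma Hop_add: "H (\<lambda>x. f x + g x) = (\<lambda>x. H f x + H g x)"
proof (rule ext)
  fix x
  have e: "(\<Sum>y\<in>{y. E x y \<noteq> 0}. complex_of_real (E x y) * ph x y * (f y + g y))
     = (\<Sum>y\<in>{y. E x y \<noteq> 0}. complex_of_real (E x y) * ph x y * f y) + (\<Sum>y\<in>{y. E x y \<noteq> 0}. complex_of_real (E x y) * ph x y * g y)"
    by (simp only: sum.distrib[symmetric] distrib_left)
  show "H (\<lambda>x. f x + g x) x = H f x + H g x"
    unfolding Hop_alt e by (simp add: algebra_simps)
qed

lemma Hop_scale: "H (\<lambda>x. c * f x) = (\<lambda>x. c * H f x)"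
proof (rule ext)
  fix x
  have e: "(\<Sum>y\<in>{y. E x y \<noteq> 0}. complex_of_real (E x y) * ph x y * (c * f y))
     = c * (\<Sum>y\<in>{y. E x y \<noteq> 0}. complex_of_real (E x y) * ph x y * f y)"
    by (simp only: sum_distrib_left mult.left_commute)
  show "H (\<lambda>x. c * f x) x = c * H f x"
    unfolding Hop_alt e by (simp add: algebra_simps)
qed

lemma Cc_diff: "f \<in> Cc \<Longrightarrow> g \<in> Cc \<Longrightarrow> f - g \<in> Cc"
  unfolding Cc_def by (auto intro: finite_subset[of _ "{x. f x \<noteq> 0} \<union> {x. g x \<noteq> 0}"])

lemma Cc_add: "f \<in> Cc \<Longrightarrow> g \<in> Cc \<Longrightarrow> (\<lambda>x. f x + g x) \<in> Cc"
  unfolding Cc_def by (auto intro: finite_subset[of _ "{x. f x \<noteq> 0} \<union> {x. g x \<noteq> 0}"])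

lemma Cc_scale: "f \<in> Cc \<Longrightarrow> (\<lambda>x. c * f x) \<in> Cc"
  unfolding Cc_def by (auto intro: finite_subset[of _ "{x. f x \<noteq> 0}"])

lemma Cc_zero: "(\<lambda>x. 0) \<in> Cc"
  unfolding Cc_def by simp

definition SS :: "('v \<Rightarrow> complex) \<Rightarrow> 'v set" where
  "SS f = {x. f x \<noteq> 0} \<union> (\<Union>y\<in>{x. f x \<noteq> 0}. {z. E y z \<noteq> 0})"

lemma SS_fin: "f \<in> Cc \<Longrightarrow> finite (SS f)"
  unfolding SS_def Cc_def using Nfin by auto

lemma supp_SS: "f x \<noteq> 0 \<Longrightarrow> x \<in> SS f"
  unfolding SS_def by auto

lemma Nb_SS: "f x \<noteq> 0 \<Longrightarrow> E x y \<noteq> 0 \<Longrightarrow> y \<in> SS f"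
  unfolding SS_def by auto

lemma Hop_zero_outside: assumes "x \<notin> SS f" shows "H f x = 0"
proof -
  have fx: "f x = 0" using assms supp_SS by blast
  have "f y = 0" if "E x y \<noteq> 0" for y
  proof (rule ccontr)
    assume "f y \<noteq> 0"
    then have "x \<in> SS f" using Nb_SS[of f y x] that E_sym[of x y] by simp
    with assms show False by simp
  qed
  then show ?thesis unfolding Hop_def using fx by simp
qed

lemma Hop_Cc: assumes "f \<in> Cc" shows "H f \<in> Cc"
  unfolding Cc_def mem_Collect_eq
  by (rule finite_subset[OF _ SS_fin[OF assms]]) (use Hop_zero_outside in blast)

lemma inner_fin:
  assumes "finite S" "\<And>x. x \<notin> S \<Longrightarrow> cnj (a x) * c x = 0"
  shows "l2_inner m a c = (\<Sum>x\<in>S. complex_of_real ((m x)\<^sup>2) * cnj (a x) * c x)"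
proof -
  have "l2_inner m a c = (\<Sum>\<^sub>\<infinity>x\<in>S. complex_of_real ((m x)\<^sup>2) * cnj (a x) * c x)"
    unfolding l2_inner_def by (rule infsum_cong_neutral) (use assms in \<open>auto simp: mult.assoc\<close>)
  then show ?thesis using assms(1) by simp
qed

lemma cnj_ph: "cnj (ph y x) = ph x y"
  by (simp add: exp_cnj \<theta>_antisym[of y x])

lemma alg1:
  fixes M I a u f B T :: complex
  assumes "M * I = 1" "B * u = T"
  shows "M * u * (a * f - I * B) = M * a * u * f - T"
proof -
  have "M * u * (a * f - I * B) = M * a * u * f - (M * I) * (B * u)" by (simp add: algebra_simps)
  then show ?thesis using assms by simp
qed

lemma alg2:
  fixes M I a u f B T :: complex
  assumes "M * I = 1" "B * f = T"
  shows "M * (a * u - I * B) * f = M * a * u * f - T"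
proof -
  have "M * (a * u - I * B) * f = M * a * u * f - (M * I) * (B * f)" by (simp add: algebra_simps)
  then show ?thesis using assms by simp
qed

lemma Hop_sym:
  assumes f: "f \<in> Cc"
  shows "l2_inner m u (H f) = l2_inner m (H u) f"
proof -
  let ?S = "SS f"
  have S: "finite ?S" by (rule SS_fin[OF f])
  let ?T = "\<lambda>x y. complex_of_real (E x y) * ph x y * cnj (u x) * f y"
  have L: "l2_inner m u (H f) = (\<Sum>x\<in>?S. complex_of_real ((m x)\<^sup>2) * cnj (u x) * H f x)"
    by (rule inner_fin[OF S]) (use Hop_zero_outside in auto)
  have R: "l2_inner m (H u) f = (\<Sum>x\<in>?S. complex_of_real ((m x)\<^sup>2) * cnj (H u x) * f x)"
    by (rule inner_fin[OF S]) (use supp_SS in force)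
  have L2: "complex_of_real ((m x)\<^sup>2) * cnj (u x) * H f x
      = complex_of_real ((m x)\<^sup>2 * (d x + V x)) * cnj (u x) * f x - (\<Sum>y\<in>?S. ?T x y)" if x: "x \<in> ?S" for x
  proof -
    have "(\<Sum>y\<in>{y. E x y \<noteq> 0}. complex_of_real (E x y) * ph x y * f y) * cnj (u x) = (\<Sum>y\<in>{y. E x y \<noteq> 0}. ?T x y)"
      by (simp add: sum_distrib_left sum_distrib_right algebra_simps)
    also have "\<dots> = (\<Sum>y\<in>?S. ?T x y)"
    proof (rule sum_supp_eq[OF Nfin S])
      fix y assume "y \<in> {y. E x y \<noteq> 0} - ?S"
      then have "f y = 0" using supp_SS by blast
      then show "?T x y = 0" by simp
    next
      fix y assume "y \<in> ?S - {y. E x y \<noteq> 0}" then show "?T x y = 0" by simp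
    qed
    finally have e: "(\<Sum>y\<in>{y. E x y \<noteq> 0}. complex_of_real (E x y) * ph x y * f y) * cnj (u x) = (\<Sum>y\<in>?S. ?T x y)" .
    have "complex_of_real ((m x)\<^sup>2) * complex_of_real (1 / (m x)\<^sup>2) = 1"
      using m_nz[of x] by (simp flip: of_real_mult)
    then show ?thesis
      unfolding Hop_alt[of f x] of_real_mult
      by (rule alg1[OF _ e])
  qed
  have R2: "complex_of_real ((m x)\<^sup>2) * cnj (H u x) * f x
      = complex_of_real ((m x)\<^sup>2 * (d x + V x)) * cnj (u x) * f x - (\<Sum>y\<in>?S. ?T y x)" if x: "x \<in> ?S" for x
  proof -
    have "cnj (\<Sum>y\<in>{y. E x y \<noteq> 0}. complex_of_real (E x y) * ph x y * u y) * f x = (\<Sum>y\<in>{y. E x y \<noteq> 0}. ?T y x)"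
      by (simp add: sum_distrib_right sum_distrib_left E_sym[of x] cnj_ph algebra_simps)
    also have "\<dots> = (\<Sum>y\<in>?S. ?T y x)"
    proof (cases "f x = 0")
      case True then show ?thesis by simp
    next
      case False
      show ?thesis
      proof (rule sum_supp_eq[OF Nfin S])
        fix y assume "y \<in> {y. E x y \<noteq> 0} - ?S"
        then show "?T y x = 0" using Nb_SS[where f=f and x=x and y=y] False by auto
      next
        fix y assume "y \<in> ?S - {y. E x y \<noteq> 0}" then show "?T y x = 0" by (simp add: E_sym[of y x])
      qed
    qed
    finally have e: "cnj (\<Sum>y\<in>{y. E x y \<noteq> 0}. complex_of_real (E x y) * ph x y * u y) * f x = (\<Sum>y\<in>?S. ?T y x)" .
    have "complex_of_real ((m x)\<^sup>2) * complex_of_real (1 / (m x)\<^sup>2) = 1"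
      using m_nz[of x] by (simp flip: of_real_mult)
    then show ?thesis
      unfolding Hop_alt[of u x] of_real_mult complex_cnj_diff complex_cnj_mult complex_cnj_complex_of_real
      by (rule alg2[OF _ e])
  qed
  have "l2_inner m u (H f) = (\<Sum>x\<in>?S. complex_of_real ((m x)\<^sup>2 * (d x + V x)) * cnj (u x) * f x) - (\<Sum>x\<in>?S. \<Sum>y\<in>?S. ?T x y)"
    unfolding L sum_subtractf[symmetric] by (intro sum.cong refl L2)
  also have "(\<Sum>x\<in>?S. \<Sum>y\<in>?S. ?T x y) = (\<Sum>x\<in>?S. \<Sum>y\<in>?S. ?T y x)"
    by (rule sum.swap)
  also have "(\<Sum>x\<in>?S. complex_of_real ((m x)\<^sup>2 * (d x + V x)) * cnj (u x) * f x) - (\<Sum>x\<in>?S. \<Sum>y\<in>?S. ?T y x)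
      = l2_inner m (H u) f"
    unfolding R sum_subtractf[symmetric] by (intro sum.cong refl R2[symmetric])
  finally show ?thesis .
qed

definition delta :: "'v \<Rightarrow> 'v \<Rightarrow> complex" where "delta x = (\<lambda>z. if z = x then 1 else 0)"

lemma delta_Cc: "delta x \<in> Cc"
  unfolding Cc_def delta_def by simp

lemma inner_delta: "l2_inner m w (delta x) = complex_of_real ((m x)\<^sup>2) * cnj (w x)"
  by (subst inner_fin[of "{x}"]) (auto simp: delta_def)

lemma adj_pointwise:
  assumes "\<And>f. f \<in> Cc \<Longrightarrow> l2_inner m u (H f) = l2_inner m w f"
  shows "H u = w"
proof (rule ext)
  fix x
  have "l2_inner m (H u) (delta x) = l2_inner m w (delta x)"
    using assms[OF delta_Cc] Hop_sym[OF delta_Cc, of u x] by simp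
  then have "cnj (H u x) = cnj (w x)"
    using m_nz[of x] by (simp add: inner_delta)
  then show "H u x = w x" by simp
qed

lemma Cc_in_A: "f \<in> Cc \<Longrightarrow> (f, H f) \<in> A"
  unfolding graph_H_Cc_def by auto

lemma A_elem: "p \<in> A \<Longrightarrow> fst p \<in> Cc \<and> snd p = H (fst p)"
  unfolding graph_H_Cc_def by auto

lemma closure_rel:
  assumes fg: "(f, g) \<in> l2_closure m A" and f': "f' \<in> Cc"
  shows "l2_inner m f (H f') = l2_inner m g f'"
proof -
  from fg obtain s where s: "\<forall>n. s n \<in> A" "(\<lambda>n. l2_norm m (fst (s n) - f)) \<longlonglongrightarrow> 0"
      "(\<lambda>n. l2_norm m (snd (s n) - g)) \<longlonglongrightarrow> 0" and l2: "in_l2 m f" "in_l2 m g"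
    unfolding l2_closure_def by auto
  have sC: "fst (s n) \<in> Cc" "snd (s n) = H (fst (s n))" for n using A_elem s(1) by auto
  have "(\<lambda>n. l2_inner m (fst (s n)) (H f')) \<longlonglongrightarrow> l2_inner m f (H f')"
    by (rule inner_tendsto_left) (use sC Cc_l2 Cc_l2[OF Hop_Cc[OF f']] f' l2 s in auto)
  moreover have "(\<lambda>n. l2_inner m (snd (s n)) f') \<longlonglongrightarrow> l2_inner m g f'"
    by (rule inner_tendsto_left) (use sC Cc_l2 Cc_l2[OF Hop_Cc[OF sC(1)]] f' l2 s in auto)
  moreover have "l2_inner m (fst (s n)) (H f') = l2_inner m (snd (s n)) f'" for n
    using Hop_sym[OF f', of "fst (s n)"] sC(2)[of n] by simp
  ultimately show ?thesis using LIMSEQ_unique by fastforce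
qed

end

locale gr2 = gr +
  fixes \<gamma> :: real
  assumes \<gamma>_pos: "\<gamma> > 0"
    and hyp: "\<And>xs :: nat \<Rightarrow> 'a. (\<forall>n. E (xs n) (xs (Suc n)) > 0) \<Longrightarrow>
        \<not> summable (\<lambda>n. (m (xs n))\<^sup>2 * (\<Prod>i<n. \<gamma> / weighted_degree E m (xs i)))"
begin

lemma d_pos: assumes "E x y > 0" shows "d x > 0"
proof -
  have "E x y \<le> (\<Sum>z\<in>{z. E x z \<noteq> 0}. E x z)"
    by (rule member_le_sum) (use assms Nfin E_nonneg in auto)
  then have "(\<Sum>z\<in>{z. E x z \<noteq> 0}. E x z) > 0" using assms by linarith
  then show ?thesis unfolding weighted_degree_def using m_pos[of x] by simp
qed

lemma d_nonneg: "d x \<ge> 0"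
  unfolding weighted_degree_def by (intro divide_nonneg_nonneg sum_nonneg) (auto simp: E_nonneg)

lemma edge_prod: assumes e: "E x y > 0" shows "d x * d y \<le> \<gamma>\<^sup>2"
proof (rule ccontr)
  assume "\<not> ?thesis"
  then have big: "d x * d y > \<gamma>\<^sup>2" by simp
  have e': "E y x > 0" using e E_sym[of x y] by simp
  have dx: "d x > 0" by (rule d_pos[OF e])
  have dy: "d y > 0" by (rule d_pos[OF e'])
  define w where "w n = (if even n then x else y)" for n :: nat
  define P where "P n = (\<Prod>i<n. \<gamma> / d (w i))" for n
  define a where "a n = (m (w n))\<^sup>2 * P n" for n
  define r where "r = \<gamma>\<^sup>2 / (d x * d y)"
  have r: "r > 0" "r < 1" using big \<gamma>_pos dx dy by (auto simp: r_def)
  define q where "q = sqrt r"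
  have q: "q > 0" "q < 1" "q\<^sup>2 = r" using r by (auto simp: q_def)
  have pair: "(\<gamma> / d (w n)) * (\<gamma> / d (w (Suc n))) = r" for n
    by (cases "even n") (auto simp: w_def r_def power2_eq_square field_simps)
  have P2: "P (Suc (Suc n)) = P n * r" for n
    unfolding P_def by (simp add: pair[of n, symmetric] mult.assoc)
  have a2: "a (Suc (Suc n)) = a n * r" for n
    unfolding a_def by (simp add: P2 w_def)
  have anonneg: "a n \<ge> 0" for n
    unfolding a_def P_def using \<gamma>_pos dx dy
    by (intro mult_nonneg_nonneg prod_nonneg) (auto simp: w_def)
  define C where "C = max (a 0) (a 1 / q)"
  have bound: "a n \<le> C * q ^ n \<and> a (Suc n) \<le> C * q ^ (Suc n)" for n
  proof (induction n)
    case 0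
    have "a 1 = q * (a 1 / q)" using q by simp
    also have "\<dots> \<le> q * C" using q unfolding C_def by (intro mult_left_mono) auto
    finally have "a 1 \<le> C * q" by (simp add: mult.commute)
    then show ?case by (simp add: C_def)
  next
    case (Suc n)
    have "a (Suc (Suc n)) = r * a n" by (simp add: a2)
    also have "\<dots> \<le> r * (C * q ^ n)" using Suc r by (intro mult_left_mono) auto
    also have "\<dots> = C * q ^ Suc (Suc n)" by (simp add: q(3)[symmetric] power2_eq_square)
    finally show ?case using Suc by simp
  qed
  have "summable (\<lambda>n. C * q ^ n)" using q by (intro summable_mult summable_geometric) simp
  then have "summable a"
    by (rule summable_comparison_test'[where N=0]) (use bound anonneg in simp)
  moreover have "\<forall>n. E (w n) (w (Suc n)) > 0" using e e' by (simp add: w_def)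
  ultimately show False using hyp[of w] unfolding a_def P_def by simp
qed

lemma local_step:
  assumes Hu: "\<And>x. H u x = c * u x" and c: "\<bar>Im c\<bar> \<ge> 2 * \<gamma>" and ux: "u x \<noteq> 0"
  shows "\<exists>y. E x y > 0 \<and> cmod (u y) \<ge> (2 * \<gamma> / d x) * cmod (u x)"
proof (rule ccontr)
  assume neg: "\<not> ?thesis"
  let ?N = "{y. E x y \<noteq> 0}"
  let ?B = "(\<Sum>y\<in>?N. complex_of_real (E x y) * ph x y * u y)"
  have mp: "m x > 0" by (rule m_pos)
  have eq: "complex_of_real (1 / (m x)\<^sup>2) * ?B = (complex_of_real (d x + V x) - c) * u x"
    using Hu[of x] unfolding Hop_alt by (simp add: algebra_simps)
  have "cmod (complex_of_real (d x + V x) - c) \<ge> 2 * \<gamma>"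
    using abs_Im_le_cmod[of "complex_of_real (d x + V x) - c"] c by simp
  then have "cmod ?B / (m x)\<^sup>2 \<ge> 2 * \<gamma> * cmod (u x)"
    using arg_cong[OF eq, of cmod] mp by (simp add: norm_mult norm_divide norm_power mult_right_mono)
  then have lb: "cmod ?B \<ge> (m x)\<^sup>2 * (2 * \<gamma> * cmod (u x))"
    using mp by (simp add: field_simps)
  have ub: "cmod ?B \<le> (\<Sum>y\<in>?N. E x y * cmod (u y))"
    by (rule order_trans[OF norm_sum]) (simp add: norm_mult E_nonneg)
  have posl: "(m x)\<^sup>2 * (2 * \<gamma> * cmod (u x)) > 0" using mp \<gamma>_pos ux by simp
  have Nne: "?N \<noteq> {}"
  proof
    assume "?N = {}"
    then have "cmod ?B = 0" by simp
    then show False using lb posl by simp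
  qed
  then obtain y0 where y0: "E x y0 \<noteq> 0" by auto
  have dx: "d x > 0" by (rule d_pos) (use y0 E_nonneg[of x y0] in \<open>simp add: less_le\<close>)
  have "(\<Sum>y\<in>?N. E x y * cmod (u y)) < (\<Sum>y\<in>?N. E x y * ((2 * \<gamma> / d x) * cmod (u x)))"
  proof (rule sum_strict_mono[OF Nfin Nne])
    fix y assume y: "y \<in> ?N"
    then have Ep: "E x y > 0" using E_nonneg[of x y] by (simp add: less_le)
    have "cmod (u y) < (2 * \<gamma> / d x) * cmod (u x)" using neg Ep by force
    then show "E x y * cmod (u y) < E x y * ((2 * \<gamma> / d x) * cmod (u x))"
      using Ep by (intro mult_strict_left_mono)
  qed
  also have "\<dots> = (\<Sum>y\<in>?N. E x y) * ((2 * \<gamma> / d x) * cmod (u x))"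
    by (rule sum_distrib_right[symmetric])
  also have "(\<Sum>y\<in>?N. E x y) = (m x)\<^sup>2 * d x"
    unfolding weighted_degree_def using mp by simp
  also have "(m x)\<^sup>2 * d x * ((2 * \<gamma> / d x) * cmod (u x)) = (m x)\<^sup>2 * (2 * \<gamma> * cmod (u x))"
    using dx by (simp add: field_simps)
  finally show False using lb ub by simp
qed

end

lemma sum_double_range: "(\<Sum>n<2*K. f n) = (\<Sum>k<K. f (2*k) + f (2*k+1))" for f :: "nat \<Rightarrow> real"
  by (induction K) (simp_all add: algebra_simps)

context gr2
begin

lemma no_eigen:
  assumes u: "in_l2 m u" and Hu: "\<And>x. H u x = c * u x" and c: "\<bar>Im c\<bar> \<ge> 2 * \<gamma>"
  shows "u x0 = 0"
proof (rule ccontr)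
  assume u0: "u x0 \<noteq> 0"
  define nxt where "nxt x = (SOME y. E x y > 0 \<and> cmod (u y) \<ge> (2 * \<gamma> / d x) * cmod (u x))" for x
  define w where "w n = (nxt ^^ n) x0" for n
  define t where "t n = cmod (u (w n))" for n
  have wS: "w (Suc n) = nxt (w n)" for n by (simp add: w_def)
  have step: "E (w n) (w (Suc n)) > 0 \<and> t (Suc n) \<ge> (2 * \<gamma> / d (w n)) * t n" if "u (w n) \<noteq> 0" for n
  proof -
    have "\<exists>y. E (w n) y > 0 \<and> cmod (u y) \<ge> (2 * \<gamma> / d (w n)) * cmod (u (w n))"
      by (rule local_step[OF Hu c that])
    then have "E (w n) (nxt (w n)) > 0 \<and> cmod (u (nxt (w n))) \<ge> (2 * \<gamma> / d (w n)) * cmod (u (w n))"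
      unfolding nxt_def by (rule someI_ex)
    then show ?thesis by (simp add: wS t_def)
  qed
  have tpos: "t n > 0" for n
  proof (induction n)
    case 0 then show ?case using u0 by (simp add: t_def w_def)
  next
    case (Suc n)
    then have "u (w n) \<noteq> 0" by (simp add: t_def)
    from step[OF this] have s: "E (w n) (w (Suc n)) > 0" "t (Suc n) \<ge> (2 * \<gamma> / d (w n)) * t n" by auto
    have "d (w n) > 0" by (rule d_pos[OF s(1)])
    then have "(2 * \<gamma> / d (w n)) * t n > 0" using Suc \<gamma>_pos by simp
    then show ?case using s(2) by simp
  qed
  have edge: "E (w n) (w (Suc n)) > 0" and tstep: "t (Suc n) \<ge> (2 * \<gamma> / d (w n)) * t n" for n
    using step[of n] tpos[of n] by (auto simp: t_def)
  have dpos: "d (w n) > 0" for n by (rule d_pos[OF edge])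
  define P where "P n = (\<Prod>i<n. \<gamma> / d (w i))" for n
  have Ppos: "P n > 0" for n unfolding P_def using dpos \<gamma>_pos by (intro prod_pos) auto
  have PS: "P (Suc n) = P n * (\<gamma> / d (w n))" for n unfolding P_def by simp
  have claimA: "t n \<ge> 2 ^ n * P n * t 0" for n
  proof (induction n)
    case 0 then show ?case by (simp add: P_def)
  next
    case (Suc n)
    have "2 ^ Suc n * P (Suc n) * t 0 = (2 * \<gamma> / d (w n)) * (2 ^ n * P n * t 0)"
      by (simp add: PS field_simps)
    also have "\<dots> \<le> (2 * \<gamma> / d (w n)) * t n"
      using Suc dpos[of n] \<gamma>_pos by (intro mult_left_mono) auto
    also have "\<dots> \<le> t (Suc n)" by (rule tstep)
    finally show ?case .
  qed
  have pair: "(\<gamma> / d (w n)) * (\<gamma> / d (w (Suc n))) \<ge> 1" for n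
  proof -
    have "d (w n) * d (w (Suc n)) \<le> \<gamma>\<^sup>2" by (rule edge_prod[OF edge])
    then show ?thesis using dpos[of n] dpos[of "Suc n"] by (simp add: field_simps power2_eq_square)
  qed
  have P2: "P (Suc (Suc n)) \<ge> P n" for n
  proof -
    have "P (Suc (Suc n)) = P n * ((\<gamma> / d (w n)) * (\<gamma> / d (w (Suc n))))" by (simp add: PS)
    also have "\<dots> \<ge> P n * 1" using pair[of n] Ppos[of n] by (intro mult_left_mono) auto
    finally show ?thesis by simp
  qed
  define cc where "cc = min 1 (\<gamma> / d (w 0))"
  have ccpos: "cc > 0" using \<gamma>_pos dpos[of 0] by (simp add: cc_def)
  have Pcc2: "P n \<ge> cc \<and> P (Suc n) \<ge> cc" for n
  proof (induction n)
    case 0 then show ?case by (simp add: cc_def P_def)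
  next
    case (Suc n) then show ?case using P2[of n] by simp
  qed
  then have Pcc: "P n \<ge> cc" for n by simp
  have t2: "t (Suc (Suc n)) > t n" for n
  proof -
    have "t (Suc (Suc n)) \<ge> (2 * \<gamma> / d (w (Suc n))) * t (Suc n)" by (rule tstep)
    also have "(2 * \<gamma> / d (w (Suc n))) * t (Suc n) \<ge> (2 * \<gamma> / d (w (Suc n))) * ((2 * \<gamma> / d (w n)) * t n)"
      using tstep[of n] dpos[of "Suc n"] \<gamma>_pos by (intro mult_left_mono) auto
    also have "(2 * \<gamma> / d (w (Suc n))) * ((2 * \<gamma> / d (w n)) * t n) = 4 * ((\<gamma> / d (w n)) * (\<gamma> / d (w (Suc n)))) * t n"
      by (simp add: field_simps)
    also have "\<dots> \<ge> 4 * 1 * t n" using pair[of n] tpos[of n] by (intro mult_right_mono mult_left_mono) auto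
    finally show ?thesis using tpos[of n] by simp
  qed
  have tmono: "t (n + 2 * Suc k) > t n" for n k
  proof (induction k)
    case 0 then show ?case using t2[of n] by (simp add: numeral_2_eq_2)
  next
    case (Suc k)
    have "n + 2 * Suc (Suc k) = Suc (Suc (n + 2 * Suc k))" by simp
    then show ?case using t2[of "n + 2 * Suc k"] Suc by simp
  qed
  have inj2: "inj (\<lambda>k. w (2 * k + j))" for j
  proof (rule injI)
    fix i k assume eq: "w (2 * i + j) = w (2 * k + j)"
    show "i = k"
    proof (rule ccontr)
      assume "i \<noteq> k"
      then consider "i < k" | "k < i" by linarith
      then show False
      proof cases
        case 1
        then obtain l where "k = Suc (i + l)" using less_imp_Suc_add by blast
        then have h: "2 * k + j = (2 * i + j) + 2 * Suc l" by simp
        have "t (2 * k + j) > t (2 * i + j)" unfolding h by (rule tmono)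
        then show False using eq by (simp add: t_def)
      next
        case 2
        then obtain l where "i = Suc (k + l)" using less_imp_Suc_add by blast
        then have h: "2 * i + j = (2 * k + j) + 2 * Suc l" by simp
        have "t (2 * i + j) > t (2 * k + j)" unfolding h by (rule tmono)
        then show False using eq by (simp add: t_def)
      qed
    qed
  qed
  define G where "G x = (m x)\<^sup>2 * (cmod (u x))\<^sup>2" for x
  have Gs: "G summable_on UNIV" using u by (simp add: in_l2_def G_def[abs_def])
  have Gnn: "G x \<ge> 0" for x by (simp add: G_def)
  have sj: "summable (\<lambda>k. G (w (2 * k + j)))" for j
  proof -
    have "G summable_on range (\<lambda>k. w (2 * k + j))"
      by (rule summable_on_subset_banach[OF Gs]) simp
    then have "(G \<circ> (\<lambda>k. w (2 * k + j))) summable_on UNIV"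
      using summable_on_reindex[of "\<lambda>k. w (2 * k + j)" UNIV G] inj2[of j] by simp
    then show ?thesis
      using summable_on_UNIV_nonneg_real_iff[of "\<lambda>k. G (w (2 * k + j))"] Gnn by (simp add: o_def)
  qed
  define F where "F n = G (w n)" for n
  have Fs: "summable F"
  proof -
    have s: "summable (\<lambda>k. F (2 * k) + F (2 * k + 1))"
      using summable_add[OF sj[of 0] sj[of 1]] by (simp add: F_def)
    show ?thesis
    proof (rule summableI_nonneg_bounded)
      show "0 \<le> F n" for n by (simp add: F_def Gnn)
      fix n
      have "(\<Sum>i<n. F i) \<le> (\<Sum>i<2*n. F i)"
        by (rule sum_mono2) (auto simp: F_def Gnn)
      also have "\<dots> = (\<Sum>k<n. F (2 * k) + F (2 * k + 1))" by (rule sum_double_range)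
      also have "\<dots> \<le> suminf (\<lambda>k. F (2 * k) + F (2 * k + 1))"
        by (rule sum_le_suminf[OF s]) (auto simp: F_def Gnn add_nonneg_nonneg)
      finally show "(\<Sum>i<n. F i) \<le> suminf (\<lambda>k. F (2 * k) + F (2 * k + 1))" .
    qed
  qed
  have cmp: "(m (w n))\<^sup>2 * P n \<le> F n / (cc * (t 0)\<^sup>2)" for n
  proof -
    have t0: "t 0 > 0" by (rule tpos)
    have a1: "cc * (t 0)\<^sup>2 \<le> P n * (t 0)\<^sup>2" using Pcc[of n] by (intro mult_right_mono) auto
    have a2: "P n * (cc * (t 0)\<^sup>2) \<le> P n * (P n * (t 0)\<^sup>2)" using a1 Ppos[of n] by (intro mult_left_mono) auto
    have "(m (w n))\<^sup>2 * P n * (cc * (t 0)\<^sup>2) \<le> (m (w n))\<^sup>2 * (P n * P n * (t 0)\<^sup>2)"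
      using mult_left_mono[OF a2, of "(m (w n))\<^sup>2"] by (simp add: mult.assoc)
    also have "P n * P n * (t 0)\<^sup>2 \<le> (t n)\<^sup>2"
    proof -
      have "P n * t 0 \<le> 2 ^ n * P n * t 0"
        using Ppos[of n] t0 by (intro mult_right_mono) (auto intro: mult_le_cancel_right1[THEN iffD2])
      also have "\<dots> \<le> t n" by (rule claimA)
      finally have "P n * t 0 \<le> t n" .
      then have "(P n * t 0)\<^sup>2 \<le> (t n)\<^sup>2" using Ppos[of n] t0 by (intro power_mono) auto
      then show ?thesis by (simp add: power2_eq_square algebra_simps)
    qed
    then have "(m (w n))\<^sup>2 * (P n * P n * (t 0)\<^sup>2) \<le> (m (w n))\<^sup>2 * (t n)\<^sup>2" by (intro mult_left_mono) auto
    also have "\<dots> = F n" by (simp add: F_def G_def t_def)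
    finally have "(m (w n))\<^sup>2 * P n * (cc * (t 0)\<^sup>2) \<le> F n" .
    then show ?thesis using ccpos t0 by (simp add: field_simps)
  qed
  have "summable (\<lambda>n. (m (w n))\<^sup>2 * P n)"
  proof (rule summable_comparison_test'[where N=0])
    show "summable (\<lambda>n. F n / (cc * (t 0)\<^sup>2))" by (rule summable_divide[OF Fs])
    fix n show "norm ((m (w n))\<^sup>2 * P n) \<le> F n / (cc * (t 0)\<^sup>2)"
      using cmp[of n] Ppos[of n] by simp
  qed
  then show False using hyp[of w] edge unfolding P_def by simp
qed

end

lemma l2_norm_zero_fun: "l2_norm m (\<lambda>x. 0) = 0"
  by (simp add: l2_norm_nrm2 nrm2_def)

lemma l2_norm_rev:
  assumes a: "in_l2 m a" and b: "in_l2 m b"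
  shows "\<bar>l2_norm m a - l2_norm m b\<bar> \<le> l2_norm m (a - b)"
proof -
  have z: "in_l2 m (\<lambda>x. 0)" by (rule in_l2_zero)
  have e1: "a - (\<lambda>x. 0) = a" "b - (\<lambda>x. 0) = b" by (rule ext, simp)+
  have "l2_norm m (a - (\<lambda>x. 0)) \<le> l2_norm m (a - b) + l2_norm m (b - (\<lambda>x. 0))"
    by (rule l2_norm_tri[OF a b z])
  moreover have "l2_norm m (b - (\<lambda>x. 0)) \<le> l2_norm m (b - a) + l2_norm m (a - (\<lambda>x. 0))"
    by (rule l2_norm_tri[OF b a z])
  ultimately show ?thesis using e1 l2_norm_sym[of m a b] by simp
qed

lemma norm_tendsto:
  assumes "\<And>n. in_l2 m (s n)" "in_l2 m a" "(\<lambda>n. l2_norm m (s n - a)) \<longlonglongrightarrow> 0"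
  shows "(\<lambda>n. l2_norm m (s n)) \<longlonglongrightarrow> l2_norm m a"
proof -
  have "(\<lambda>n. l2_norm m (s n) - l2_norm m a) \<longlonglongrightarrow> 0"
    by (rule Lim_null_comparison[OF _ assms(3)]) (rule always_eventually, use l2_norm_rev assms in auto)
  then show ?thesis by (rule LIM_zero_cancel)
qed

lemma inner_tendsto_right:
  assumes "\<And>n. in_l2 m (s n)" "in_l2 m a" "in_l2 m c"
    and "(\<lambda>n. l2_norm m (s n - a)) \<longlonglongrightarrow> 0"
  shows "(\<lambda>n. l2_inner m c (s n)) \<longlonglongrightarrow> l2_inner m c a"
proof -
  have "(\<lambda>n. cnj (l2_inner m (s n) c)) \<longlonglongrightarrow> cnj (l2_inner m a c)"
    by (intro tendsto_cnj inner_tendsto_left assms)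
  then show ?thesis by (simp add: inner_cnj[of m c])
qed

lemma variation:
  assumes r: "in_l2 m r" and q: "in_l2 m q"
    and H: "\<And>t. l2_norm m (r - (\<lambda>x. t * q x)) \<ge> l2_norm m r"
  shows "l2_inner m r q = 0"
proof (rule ccontr)
  assume nz: "l2_inner m r q \<noteq> 0"
  define z where "z = l2_inner m r q"
  define Q where "Q = nrm2 m q"
  have Q: "Q \<ge> 0" by (simp add: Q_def nrm2_nonneg)
  define s where "s = 1 / (Q + 1)"
  have s: "s > 0" using Q by (simp add: s_def)
  define t where "t = complex_of_real s * cnj z"
  have tq: "in_l2 m (\<lambda>x. t * q x)" by (rule in_l2_scale[OF q])
  have "nrm2 m (r - (\<lambda>x. t * q x)) \<ge> nrm2 m r"
  proof -
    have "l2_norm m r \<le> l2_norm m (r - (\<lambda>x. t * q x))" by (rule H)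
    then have "(l2_norm m r)\<^sup>2 \<le> (l2_norm m (r - (\<lambda>x. t * q x)))\<^sup>2"
      by (intro power_mono) (auto simp: l2_norm_nonneg)
    then show ?thesis by (simp add: l2_norm_sq)
  qed
  moreover have "nrm2 m (r - (\<lambda>x. t * q x)) = nrm2 m r + (cmod t)\<^sup>2 * Q - 2 * Re (t * z)"
    by (simp add: nrm2_diff[OF r tq] nrm2_scale inner_scale_right Q_def z_def)
  ultimately have ineq: "2 * Re (t * z) \<le> (cmod t)\<^sup>2 * Q" by simp
  have "t * z = complex_of_real (s * (cmod z)\<^sup>2)"
    using cnj_mult_self[of z] by (simp add: t_def mult.commute)
  then have "Re (t * z) = s * (cmod z)\<^sup>2" by simp
  moreover have "(cmod t)\<^sup>2 = s\<^sup>2 * (cmod z)\<^sup>2" using s by (simp add: t_def norm_mult power_mult_distrib)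
  ultimately have "2 * (s * (cmod z)\<^sup>2) \<le> s\<^sup>2 * (cmod z)\<^sup>2 * Q" using ineq by simp
  then have h1: "2 * (cmod z)\<^sup>2 \<le> (s * Q) * (cmod z)\<^sup>2" using s by (simp add: power2_eq_square field_simps)
  have h2: "s * Q < 1" using Q by (simp add: s_def)
  have h3: "(cmod z)\<^sup>2 > 0" using nz by (simp add: z_def)
  have "(s * Q) * (cmod z)\<^sup>2 < 1 * (cmod z)\<^sup>2" by (rule mult_strict_right_mono[OF h2 h3])
  then show False using h1 h3 by linarith
qed

context gr2
begin

definition lam :: complex where "lam = \<i> * complex_of_real (2 * \<gamma>)"

definition K :: "('a \<Rightarrow> complex) \<Rightarrow> 'a \<Rightarrow> complex" where
  "K f = H f - (\<lambda>x. lam * f x)"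

lemma lam_norm: "cmod lam = 2 * \<gamma>" using \<gamma>_pos by (simp add: lam_def norm_mult)

lemma inner_H_real: assumes f: "f \<in> Cc" shows "Im (l2_inner m (H f) f) = 0"
proof -
  have "l2_inner m (H f) f = l2_inner m f (H f)" using Hop_sym[OF f, of f] by simp
  also have "\<dots> = cnj (l2_inner m (H f) f)" by (rule inner_cnj)
  finally have "l2_inner m (H f) f = cnj (l2_inner m (H f) f)" .
  then have "Im (l2_inner m (H f) f) = Im (cnj (l2_inner m (H f) f))" by (rule arg_cong)
  then show ?thesis by simp
qed

lemma K_norm: assumes f: "f \<in> Cc"
  shows "nrm2 m (K f) = nrm2 m (H f) + (2 * \<gamma>)\<^sup>2 * nrm2 m f"
proof -
  have fl: "in_l2 m f" by (rule Cc_l2[OF f])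
  have Hl: "in_l2 m (H f)" by (rule Cc_l2[OF Hop_Cc[OF f]])
  have sl: "in_l2 m (\<lambda>x. lam * f x)" by (rule in_l2_scale[OF fl])
  have "Re (l2_inner m (H f) (\<lambda>x. lam * f x)) = 0"
    using inner_H_real[OF f] by (simp add: inner_scale_right lam_def)
  then show ?thesis
    unfolding K_def by (simp add: nrm2_diff[OF Hl sl] nrm2_scale lam_norm)
qed

lemma K_diff: "K (f - g) = K f - K g"
  unfolding K_def by (rule ext) (simp add: Hop_diff algebra_simps)

lemma K_lin: "K (\<lambda>x. a * f x + b * g x) = (\<lambda>x. a * K f x + b * K g x)"
  unfolding K_def using Hop_add[of "\<lambda>x. a * f x" "\<lambda>x. b * g x"]
  by (rule_tac ext) (simp add: Hop_scale algebra_simps)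

lemma K_l2: "f \<in> Cc \<Longrightarrow> in_l2 m (K f)"
  unfolding K_def by (intro in_l2_diff in_l2_scale Cc_l2 Hop_Cc)

lemma Cc_lin: "f \<in> Cc \<Longrightarrow> g \<in> Cc \<Longrightarrow> (\<lambda>x. a * f x + b * g x) \<in> Cc"
  by (intro Cc_add Cc_scale)

end

lemma parallelogram:
  assumes a: "in_l2 m a" and b: "in_l2 m b"
  shows "nrm2 m (a - b) + nrm2 m (\<lambda>x. a x + b x) = 2 * nrm2 m a + 2 * nrm2 m b"
  by (simp add: nrm2_diff[OF a b] nrm2_add[OF a b])

lemma sq_bound: "0 \<le> x \<Longrightarrow> x < y \<Longrightarrow> x\<^sup>2 \<le> y\<^sup>2" for x y :: real
  by (intro power_mono) auto

context gr2
begin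

lemma range_surj:
  assumes h: "in_l2 m h"
  shows "\<exists>f g. (f, g) \<in> l2_closure m A \<and> h = g - (\<lambda>x. lam * f x)"
proof -
  define D where "D = (\<lambda>f. l2_norm m (h - K f)) ` Cc"
  define \<delta> where "\<delta> = Inf D"
  have Dne: "D \<noteq> {}" using Cc_zero by (auto simp: D_def)
  have bdd: "bdd_below D" unfolding D_def by (rule bdd_belowI[of _ 0]) (auto simp: l2_norm_nonneg)
  have \<delta>le: "\<delta> \<le> l2_norm m (h - K f)" if "f \<in> Cc" for f
    unfolding \<delta>_def by (rule cInf_lower[OF _ bdd]) (use that in \<open>simp add: D_def\<close>)
  have \<delta>nn: "\<delta> \<ge> 0" unfolding \<delta>_def by (rule cInf_greatest[OF Dne]) (auto simp: D_def l2_norm_nonneg)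
  define ep where "ep n = inverse (real (Suc n))" for n
  have ep_pos: "ep n > 0" for n by (simp add: ep_def)
  have ex: "\<exists>f. f \<in> Cc \<and> l2_norm m (h - K f) < \<delta> + ep n" for n
  proof -
    have "Inf D < \<delta> + ep n" using ep_pos[of n] by (simp add: \<delta>_def)
    from cInf_lessD[OF Dne this] show ?thesis by (auto simp: D_def)
  qed
  define fs where "fs n = (SOME f. f \<in> Cc \<and> l2_norm m (h - K f) < \<delta> + ep n)" for n
  have fs: "fs n \<in> Cc" "l2_norm m (h - K (fs n)) < \<delta> + ep n" for n
    using someI_ex[OF ex[of n]] by (auto simp: fs_def)
  have fsl: "in_l2 m (fs n)" for n by (rule Cc_l2[OF fs(1)])
  have Hfsl: "in_l2 m (H (fs n))" for n by (rule Cc_l2[OF Hop_Cc[OF fs(1)]])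
  have Kl: "in_l2 m (K (fs n))" for n by (rule K_l2[OF fs(1)])
  have al: "in_l2 m (h - K (fs n))" for n by (rule in_l2_diff[OF h Kl])
  have par: "nrm2 m (K (fs j - fs n)) \<le> 2 * (\<delta> + ep n)\<^sup>2 + 2 * (\<delta> + ep j)\<^sup>2 - 4 * \<delta>\<^sup>2" for n j
  proof -
    define avg where "avg = (\<lambda>x. (1/2) * fs n x + (1/2) * fs j x)"
    have avgC: "avg \<in> Cc" unfolding avg_def by (rule Cc_lin[OF fs(1) fs(1)])
    have e1: "(h - K (fs n)) - (h - K (fs j)) = K (fs j - fs n)"
      by (rule ext) (simp add: K_diff)
    have e2: "(\<lambda>x. (h - K (fs n)) x + (h - K (fs j)) x) = (\<lambda>x. 2 * (h - K avg) x)"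
      unfolding avg_def K_lin by (rule ext) (simp add: algebra_simps)
    have q1: "nrm2 m (\<lambda>x. 2 * (h - K avg) x) = 4 * nrm2 m (h - K avg)"
      by (simp only: nrm2_scale) (simp add: fun_diff_def)
    have "\<delta>\<^sup>2 \<le> (l2_norm m (h - K avg))\<^sup>2" using \<delta>le[OF avgC] \<delta>nn by (intro power_mono) auto
    then have q2: "\<delta>\<^sup>2 \<le> nrm2 m (h - K avg)" by (simp only: l2_norm_sq)
    have lo: "nrm2 m (\<lambda>x. 2 * (h - K avg) x) \<ge> 4 * \<delta>\<^sup>2" unfolding q1 using q2 by linarith
    have up: "nrm2 m (h - K (fs i)) \<le> (\<delta> + ep i)\<^sup>2" for i
      using sq_bound[OF l2_norm_nonneg fs(2)[of i]] by (simp add: l2_norm_sq)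
    have "nrm2 m (K (fs j - fs n)) = 2 * nrm2 m (h - K (fs n)) + 2 * nrm2 m (h - K (fs j)) - nrm2 m (\<lambda>x. 2 * (h - K avg) x)"
      using parallelogram[OF al[of n] al[of j]] unfolding e1 e2 by simp
    then show ?thesis using lo up[of n] up[of j] by linarith
  qed
  define cc where "cc = min 1 ((2 * \<gamma>)\<^sup>2)"
  have ccpos: "cc > 0" using \<gamma>_pos by (simp add: cc_def)
  have cau: "\<exists>N. \<forall>n\<ge>N. \<forall>j\<ge>N. nrm2 m (K (fs j - fs n)) < cc * e\<^sup>2" if e: "e > 0" for e
  proof -
    define \<eta> where "\<eta> = min 1 (cc * e\<^sup>2 / (8 * (2 * \<delta> + 1)))"
    have \<eta>pos: "\<eta> > 0" using ccpos e \<delta>nn by (simp add: \<eta>_def)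
    obtain N where N: "inverse (real (Suc N)) < \<eta>" using reals_Archimedean[OF \<eta>pos] by blast
    have "\<forall>n\<ge>N. \<forall>j\<ge>N. nrm2 m (K (fs j - fs n)) < cc * e\<^sup>2"
    proof (intro allI impI)
      fix n j assume n: "N \<le> n" and j: "N \<le> j"
      have epn: "ep i \<le> \<eta>" if "N \<le> i" for i
      proof -
        have "ep i \<le> inverse (real (Suc N))" unfolding ep_def using that
          by (intro le_imp_inverse_le) auto
        then show ?thesis using N by simp
      qed
      have b: "(\<delta> + ep i)\<^sup>2 \<le> (\<delta> + \<eta>)\<^sup>2" if "N \<le> i" for i
        using epn[OF that] ep_pos[of i] \<delta>nn by (intro power_mono) auto
      have "nrm2 m (K (fs j - fs n)) \<le> 4 * (\<delta> + \<eta>)\<^sup>2 - 4 * \<delta>\<^sup>2"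
        using par[where n=n and j=j] b[OF n] b[OF j] by linarith
      also have "\<dots> = 4 * \<eta> * (2 * \<delta> + \<eta>)" by (simp add: power2_eq_square algebra_simps)
      also have "\<dots> \<le> 4 * \<eta> * (2 * \<delta> + 1)" using \<eta>pos by (intro mult_left_mono) (auto simp: \<eta>_def)
      also have "\<dots> \<le> cc * e\<^sup>2 / 2"
      proof -
        have "\<eta> \<le> cc * e\<^sup>2 / (8 * (2 * \<delta> + 1))" by (simp add: \<eta>_def)
        then show ?thesis using \<delta>nn by (simp add: field_simps)
      qed
      also have "\<dots> < cc * e\<^sup>2" using ccpos e by simp
      finally show "nrm2 m (K (fs j - fs n)) < cc * e\<^sup>2" .
    qed
    then show ?thesis by blast
  qed
  have dl: "in_l2 m (fs j - fs n)" for j n by (rule in_l2_diff[OF fsl fsl])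
  have dC: "fs j - fs n \<in> Cc" for j n by (rule Cc_diff[OF fs(1) fs(1)])
  have small: "nrm2 m (fs j - fs n) < e\<^sup>2 \<and> nrm2 m (H (fs j) - H (fs n)) < e\<^sup>2"
    if "nrm2 m (K (fs j - fs n)) < cc * e\<^sup>2" for j n e
  proof -
    have k: "nrm2 m (K (fs j - fs n)) = nrm2 m (H (fs j - fs n)) + (2 * \<gamma>)\<^sup>2 * nrm2 m (fs j - fs n)"
      by (rule K_norm[OF dC])
    have nn: "nrm2 m (H (fs j - fs n)) \<ge> 0" "nrm2 m (fs j - fs n) \<ge> 0" by (simp_all add: nrm2_nonneg)
    have c1: "cc \<le> 1" "cc \<le> (2 * \<gamma>)\<^sup>2" by (simp_all add: cc_def)
    have e2: "e\<^sup>2 \<ge> 0" by simp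
    have "(2 * \<gamma>)\<^sup>2 * nrm2 m (fs j - fs n) < (2 * \<gamma>)\<^sup>2 * e\<^sup>2"
      using that k nn c1 mult_right_mono[OF c1(2) e2] by linarith
    then have A: "nrm2 m (fs j - fs n) < e\<^sup>2" using \<gamma>_pos by simp
    have "nrm2 m (H (fs j - fs n)) < e\<^sup>2"
      using that k nn c1 mult_right_mono[OF c1(1) e2] mult_nonneg_nonneg[OF zero_le_power2[of "2 * \<gamma>"] nn(2)] by linarith
    then show ?thesis using A by (simp add: Hop_diff)
  qed
  have C1: "\<exists>N. \<forall>n\<ge>N. \<forall>k\<ge>N. l2_norm m (fs n - fs k) < e" if e: "e > 0" for e
  proof -
    obtain N where N: "\<forall>n\<ge>N. \<forall>j\<ge>N. nrm2 m (K (fs j - fs n)) < cc * e\<^sup>2" using cau[OF e] by blast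
    have "l2_norm m (fs n - fs k) < e" if "n \<ge> N" "k \<ge> N" for n k
    proof -
      have "nrm2 m (fs n - fs k) < e\<^sup>2" using small N that by blast
      then have "sqrt (nrm2 m (fs n - fs k)) < sqrt (e\<^sup>2)" by (rule real_sqrt_less_mono)
      then show ?thesis using e by (simp add: l2_norm_nrm2)
    qed
    then show ?thesis by blast
  qed
  have C2: "\<exists>N. \<forall>n\<ge>N. \<forall>k\<ge>N. l2_norm m (H (fs n) - H (fs k)) < e" if e: "e > 0" for e
  proof -
    obtain N where N: "\<forall>n\<ge>N. \<forall>j\<ge>N. nrm2 m (K (fs j - fs n)) < cc * e\<^sup>2" using cau[OF e] by blast
    have "l2_norm m (H (fs n) - H (fs k)) < e" if "n \<ge> N" "k \<ge> N" for n k
    proof -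
      have "nrm2 m (H (fs n) - H (fs k)) < e\<^sup>2" using small N that by blast
      then have "sqrt (nrm2 m (H (fs n) - H (fs k))) < sqrt (e\<^sup>2)" by (rule real_sqrt_less_mono)
      then show ?thesis using e by (simp add: l2_norm_nrm2)
    qed
    then show ?thesis by blast
  qed
  obtain f where fl: "in_l2 m f" and fconv: "(\<lambda>n. l2_norm m (fs n - f)) \<longlonglongrightarrow> 0"
    using l2_complete[of m fs, OF m_pos fsl C1] by blast
  obtain g where gl: "in_l2 m g" and gconv: "(\<lambda>n. l2_norm m (H (fs n) - g)) \<longlonglongrightarrow> 0"
    using l2_complete[of m "\<lambda>n. H (fs n)", OF m_pos Hfsl C2] by blast
  have clo: "(f, g) \<in> l2_closure m A"
    unfolding l2_closure_def
    using fl gl fconv gconv Cc_in_A[OF fs(1)]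
    by (auto intro!: exI[of _ "\<lambda>n. (fs n, H (fs n))"])
  define k where "k = g - (\<lambda>x. lam * f x)"
  have lf: "in_l2 m (\<lambda>x. lam * f x)" by (rule in_l2_scale[OF fl])
  have kl: "in_l2 m k" unfolding k_def by (rule in_l2_diff[OF gl lf])
  have Kk: "(\<lambda>n. l2_norm m (K (fs n) - k)) \<longlonglongrightarrow> 0"
  proof -
    have eq: "K (fs n) - k = (H (fs n) - g) - (\<lambda>x. lam * (fs n - f) x)" for n
      by (rule ext) (simp add: K_def k_def algebra_simps)
    have bnd: "l2_norm m (K (fs n) - k) \<le> l2_norm m (H (fs n) - g) + 2 * \<gamma> * l2_norm m (fs n - f)" for n
    proof -
      have "l2_norm m (K (fs n) - k) \<le> l2_norm m (H (fs n) - g) + l2_norm m (\<lambda>x. lam * (fs n - f) x)"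
        unfolding eq by (rule l2_norm_diff_le) (intro in_l2_diff in_l2_scale Hfsl gl fsl fl)+
      then show ?thesis by (simp add: l2_norm_scale lam_norm fun_diff_def)
    qed
    have "(\<lambda>n. l2_norm m (H (fs n) - g) + 2 * \<gamma> * l2_norm m (fs n - f)) \<longlonglongrightarrow> 0 + 2 * \<gamma> * 0"
      by (intro tendsto_add tendsto_mult tendsto_const gconv fconv)
    then have t0: "(\<lambda>n. l2_norm m (H (fs n) - g) + 2 * \<gamma> * l2_norm m (fs n - f)) \<longlonglongrightarrow> 0" by simp
    show ?thesis
      by (rule Lim_null_comparison[OF _ t0]) (rule always_eventually, use bnd l2_norm_nonneg[of m "K (fs _) - k"] in auto)
  qed
  have diffeq: "l2_norm m ((h - K (fs n)) - (h - k)) = l2_norm m (K (fs n) - k)" for n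
  proof -
    have "(h - K (fs n)) - (h - k) = k - K (fs n)" by (rule ext) simp
    then show ?thesis by (simp add: l2_norm_sym)
  qed
  have hkl: "in_l2 m (h - k)" by (rule in_l2_diff[OF h kl])
  have lim1: "(\<lambda>n. l2_norm m (h - K (fs n))) \<longlonglongrightarrow> l2_norm m (h - k)"
    by (rule norm_tendsto[OF al hkl]) (use Kk diffeq in simp)
  have lim2: "(\<lambda>n. l2_norm m (h - K (fs n))) \<longlonglongrightarrow> \<delta>"
  proof (rule tendsto_sandwich)
    show "\<forall>\<^sub>F n in sequentially. \<delta> \<le> l2_norm m (h - K (fs n))"
      by (rule always_eventually) (use \<delta>le[OF fs(1)] in blast)
    show "\<forall>\<^sub>F n in sequentially. l2_norm m (h - K (fs n)) \<le> \<delta> + ep n"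
      by (rule always_eventually) (use fs(2) less_imp_le in blast)
    show "(\<lambda>n. \<delta>) \<longlonglongrightarrow> \<delta>" by simp
    have "(\<lambda>n. \<delta> + ep n) \<longlonglongrightarrow> \<delta> + 0"
      unfolding ep_def by (intro tendsto_add tendsto_const LIMSEQ_inverse_real_of_nat)
    then show "(\<lambda>n. \<delta> + ep n) \<longlonglongrightarrow> \<delta>" by simp
  qed
  have hk: "l2_norm m (h - k) = \<delta>" using LIMSEQ_unique[OF lim1 lim2] .
  have orth: "l2_inner m (h - k) (K f') = 0" if f': "f' \<in> Cc" for f'
  proof (rule variation[OF hkl K_l2[OF f']])
    fix t
    define b where "b n = h - K (\<lambda>x. 1 * fs n x + t * f' x)" for n
    have bC: "(\<lambda>x. 1 * fs n x + t * f' x) \<in> Cc" for n by (rule Cc_lin[OF fs(1) f'])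
    have bl: "in_l2 m (b n)" for n unfolding b_def by (rule in_l2_diff[OF h K_l2[OF bC]])
    have tl: "in_l2 m ((h - k) - (\<lambda>x. t * K f' x))" by (rule in_l2_diff[OF hkl in_l2_scale[OF K_l2[OF f']]])
    have beq: "b n - ((h - k) - (\<lambda>x. t * K f' x)) = k - K (fs n)" for n
      unfolding b_def K_lin by (rule ext) simp
    have "(\<lambda>n. l2_norm m (b n)) \<longlonglongrightarrow> l2_norm m ((h - k) - (\<lambda>x. t * K f' x))"
      by (rule norm_tendsto[OF bl tl]) (use Kk in \<open>simp add: beq l2_norm_sym[of m k]\<close>)
    moreover have "\<delta> \<le> l2_norm m (b n)" for n unfolding b_def by (rule \<delta>le[OF bC])
    ultimately have "\<delta> \<le> l2_norm m ((h - k) - (\<lambda>x. t * K f' x))"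
      by (intro LIMSEQ_le_const) auto
    then show "l2_norm m ((h - k) - (\<lambda>x. t * K f' x)) \<ge> l2_norm m (h - k)" using hk by simp
  qed
  have adj: "l2_inner m (h - k) (H f') = l2_inner m (\<lambda>x. cnj lam * (h - k) x) f'" if f': "f' \<in> Cc" for f'
  proof -
    have fl': "in_l2 m f'" by (rule Cc_l2[OF f'])
    have "0 = l2_inner m (h - k) (K f')" using orth[OF f'] by simp
    also have "\<dots> = l2_inner m (h - k) (H f') - l2_inner m (h - k) (\<lambda>x. lam * f' x)"
      unfolding K_def by (rule inner_diff_right[OF Cc_l2[OF Hop_Cc[OF f']] in_l2_scale[OF fl'] hkl])
    finally have "l2_inner m (h - k) (H f') = lam * l2_inner m (h - k) f'"
      by (simp add: inner_scale_right)
    then show ?thesis by (simp only: inner_scale_left complex_cnj_cnj)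
  qed
  have Hr: "H (h - k) = (\<lambda>x. cnj lam * (h - k) x)" by (rule adj_pointwise[OF adj])
  have r0: "(h - k) x = 0" for x
    by (rule no_eigen[OF hkl, of "cnj lam"]) (use Hr \<gamma>_pos in \<open>auto simp: lam_def\<close>)
  have "h = k" using r0 by (intro ext) (simp add: right_minus_eq)
  then show ?thesis using clo unfolding k_def by blast
qed

end

context gr2
begin

lemma A_l2: "(f, g) \<in> A \<Longrightarrow> in_l2 m f \<and> in_l2 m g"
  unfolding graph_H_Cc_def by (auto intro: Cc_l2 Hop_Cc)

lemma dd_A: "densely_defined_operator m A"
  unfolding densely_defined_operator_def
proof (intro conjI allI impI ballI)
  show "\<And>p. p \<in> A \<Longrightarrow> (case p of (f, g) \<Rightarrow> in_l2 m f \<and> in_l2 m g)"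
    using A_l2 by auto
  show "\<And>f g h. (f, g) \<in> A \<Longrightarrow> (f, h) \<in> A \<Longrightarrow> g = h"
    unfolding graph_H_Cc_def by auto
  fix u :: "'a \<Rightarrow> complex" and e :: real assume u: "in_l2 m u" and e: "0 < e"
  obtain f where f: "f \<in> Cc" "l2_norm m (f - u) < e" using l2_density[OF u e] by blast
  show "\<exists>(f, g)\<in>A. l2_norm m (f - u) < e"
    using f Cc_in_A[OF f(1)] by (intro bexI[of _ "(f, H f)"]) auto
qed

lemma A_sub: assumes "p \<in> A" shows "p \<in> l2_closure m A"
proof -
  obtain f where f: "f \<in> Cc" "p = (f, H f)" using assms unfolding graph_H_Cc_def by auto
  have z: "l2_norm m (a - a) = 0" for a :: "'a \<Rightarrow> complex"
  proof -
    have "a - a = (\<lambda>x. 0)" by (rule ext) simp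
    then show ?thesis by (simp add: l2_norm_zero_fun)
  qed
  show ?thesis
    unfolding l2_closure_def f(2)
    using f(1) Cc_l2[OF f(1)] Cc_l2[OF Hop_Cc[OF f(1)]] Cc_in_A[OF f(1)]
    by (auto intro!: exI[of _ "\<lambda>n. (f, H f)"] simp: z)
qed

lemma closure_l2: "(f, g) \<in> l2_closure m A \<Longrightarrow> in_l2 m f \<and> in_l2 m g"
  unfolding l2_closure_def by auto

lemma closure_single:
  assumes "(f, g) \<in> l2_closure m A" "(f, h) \<in> l2_closure m A"
  shows "g = h"
proof (rule ext)
  fix x
  have "l2_inner m g (delta x) = l2_inner m h (delta x)"
    using closure_rel[OF assms(1) delta_Cc] closure_rel[OF assms(2) delta_Cc] by simp
  then have "cnj (g x) = cnj (h x)" using m_nz[of x] by (simp add: inner_delta)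
  then show "g x = h x" by simp
qed

lemma dd_closure: "densely_defined_operator m (l2_closure m A)"
  unfolding densely_defined_operator_def
proof (intro conjI allI impI ballI)
  show "\<And>p. p \<in> l2_closure m A \<Longrightarrow> (case p of (f, g) \<Rightarrow> in_l2 m f \<and> in_l2 m g)"
    using closure_l2 by auto
  show "\<And>f g h. (f, g) \<in> l2_closure m A \<Longrightarrow> (f, h) \<in> l2_closure m A \<Longrightarrow> g = h"
    by (rule closure_single)
  fix u :: "'a \<Rightarrow> complex" and e :: real assume u: "in_l2 m u" and e: "0 < e"
  obtain f where f: "f \<in> Cc" "l2_norm m (f - u) < e" using l2_density[OF u e] by blast
  show "\<exists>(f, g)\<in>l2_closure m A. l2_norm m (f - u) < e"
    using f A_sub[OF Cc_in_A[OF f(1)]] by (intro bexI[of _ "(f, H f)"]) auto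
qed

lemma adj_sub: assumes uw: "(u, w) \<in> l2_adjoint m (l2_closure m A)" shows "(u, w) \<in> l2_closure m A"
proof -
  have ul: "in_l2 m u" and wl: "in_l2 m w"
    and rel: "\<And>f g. (f, g) \<in> l2_closure m A \<Longrightarrow> l2_inner m u g = l2_inner m w f"
    using uw unfolding l2_adjoint_def by auto
  have relA: "l2_inner m u (H f') = l2_inner m w f'" if "f' \<in> Cc" for f'
    using rel[OF A_sub[OF Cc_in_A[OF that]]] .
  have hl: "in_l2 m (w - (\<lambda>x. lam * u x))" by (rule in_l2_diff[OF wl in_l2_scale[OF ul]])
  obtain f g where fg: "(f, g) \<in> l2_closure m A" and heq: "w - (\<lambda>x. lam * u x) = g - (\<lambda>x. lam * f x)"
    using range_surj[OF hl] by blast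
  have fl: "in_l2 m f" and gl: "in_l2 m g" using closure_l2[OF fg] by auto
  have "l2_inner m (u - f) (H f') = l2_inner m (w - g) f'" if f': "f' \<in> Cc" for f'
  proof -
    have Hl: "in_l2 m (H f')" by (rule Cc_l2[OF Hop_Cc[OF f']])
    have fl': "in_l2 m f'" by (rule Cc_l2[OF f'])
    have "l2_inner m (u - f) (H f') = l2_inner m u (H f') - l2_inner m f (H f')"
      by (rule inner_diff_left[OF ul fl Hl])
    also have "\<dots> = l2_inner m w f' - l2_inner m g f'"
      using relA[OF f'] closure_rel[OF fg f'] by simp
    also have "\<dots> = l2_inner m (w - g) f'"
      by (rule inner_diff_left[OF wl gl fl', symmetric])
    finally show ?thesis .
  qed
  then have Hd: "H (u - f) = w - g" by (rule adj_pointwise)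
  have wg: "w - g = (\<lambda>x. lam * (u - f) x)"
  proof (rule ext)
    fix x
    have "w x - lam * u x = g x - lam * f x" using fun_cong[OF heq, of x] by simp
    then show "(w - g) x = lam * (u - f) x" by (simp add: algebra_simps)
  qed
  have z: "(u - f) x = 0" for x
    by (rule no_eigen[OF in_l2_diff[OF ul fl], of lam]) (use Hd wg \<gamma>_pos in \<open>auto simp: lam_def\<close>)
  have "u = f" using z by (intro ext) (simp add: right_minus_eq)
  moreover have "w = g" using wg z by (intro ext) (metis fun_cong minus_apply mult_zero_right right_minus_eq)
  ultimately show ?thesis using fg by simp
qed

lemma sub_adj: assumes fg: "(f, g) \<in> l2_closure m A" shows "(f, g) \<in> l2_adjoint m (l2_closure m A)"
proof -
  have fl: "in_l2 m f" and gl: "in_l2 m g" using closure_l2[OF fg] by auto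
  have "l2_inner m f g' = l2_inner m g f'" if fg': "(f', g') \<in> l2_closure m A" for f' g'
  proof -
    from fg' obtain s where s: "\<forall>n. s n \<in> A" "(\<lambda>n. l2_norm m (fst (s n) - f')) \<longlonglongrightarrow> 0"
        "(\<lambda>n. l2_norm m (snd (s n) - g')) \<longlonglongrightarrow> 0" and l2: "in_l2 m f'" "in_l2 m g'"
      unfolding l2_closure_def by auto
    have sC: "fst (s n) \<in> Cc" "snd (s n) = H (fst (s n))" for n using A_elem s(1) by auto
    have "(\<lambda>n. l2_inner m f (snd (s n))) \<longlonglongrightarrow> l2_inner m f g'"
      by (rule inner_tendsto_right) (use sC Cc_l2[OF Hop_Cc[OF sC(1)]] fl l2 s in auto)
    moreover have "(\<lambda>n. l2_inner m g (fst (s n))) \<longlonglongrightarrow> l2_inner m g f'"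
      by (rule inner_tendsto_right) (use sC Cc_l2 gl l2 s in auto)
    moreover have "l2_inner m f (snd (s n)) = l2_inner m g (fst (s n))" for n
      using closure_rel[OF fg sC(1)[of n]] sC(2)[of n] by simp
    ultimately show ?thesis using LIMSEQ_unique by fastforce
  qed
  then show ?thesis unfolding l2_adjoint_def using fl gl by auto
qed

lemma esa: "essentially_self_adjoint_l2 m A"
  unfolding essentially_self_adjoint_l2_def self_adjoint_l2_def
  using dd_A dd_closure adj_sub sub_adj by auto

end

theorem corollary2p4:
  fixes E :: "'v::countable \<Rightarrow> 'v \<Rightarrow> real"
    and m :: "'v \<Rightarrow> real"
    and \<theta> :: "'v \<Rightarrow> 'v \<Rightarrow> real"
    and V :: "'v \<Rightarrow> real"
    and \<gamma> :: real
  assumes E_nonneg: "\<And>x y. E x y \<ge> 0"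
    and E_sym: "\<And>x y. E x y = E y x"
    and m_pos: "\<And>x. m x > 0"
    and \<theta>_antisym: "\<And>x y. \<theta> x y = - \<theta> y x"
    and \<theta>_range: "\<And>x y. \<theta> x y \<in> {-pi..pi}"
    and locally_finite: "\<And>x. finite {y. E x y > 0}"
    and connected: "\<And>x y. (x, y) \<in> {(a, b). E a b > 0}\<^sup>*"
    and no_loops: "\<And>x. E x x = 0"
    and \<gamma>_pos: "\<gamma> > 0"
    and hyp: "\<And>xs :: nat \<Rightarrow> 'v. (\<forall>n. E (xs n) (xs (Suc n)) > 0) \<Longrightarrow>
        \<not> summable (\<lambda>n. (m (xs n))\<^sup>2 * (\<Prod>i<n. \<gamma> / weighted_degree E m (xs i)))"
  shows "essentially_self_adjoint_l2 m (graph_H_Cc E m \<theta> V)"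
proof -
  interpret gr2 E m \<theta> V \<gamma>
    by unfold_locales (use E_nonneg E_sym m_pos \<theta>_antisym locally_finite \<gamma>_pos hyp in blast)+
  show ?thesis by (rule esa)
qed

end
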